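(* Let $p$ be an odd prime, $f:\mathbb{F}_p^n\to[0,1]$ with $\mathbb{E}[f]=\alpha\ge59/60$, $\gamma=1-\alpha>0$, and $\epsilon>0$. Suppose $H$ is a subspace of $\mathbb{F}_p^n$ with $|H|>\max(\gamma^{-3},4/\epsilon)$ and $\lambda(H)<\alpha^3-\epsilon$. Then there is a subspace $H'\subseteq H$ with $\mathrm{Codim}(H')\le\mathrm{Codim}(H)+p^{\mathrm{Codim}(H)}\cdot144/\epsilon^2$ such that $$b(H')-\alpha^3\ge\Big(1+\frac{1}{36\gamma}\Big)(b(H)-\alpha^3)+\frac{\epsilon}{20\gamma}.$$
   Context: For $f:\mathbb{F}_p^n\to[0,1]$ and a subspace $H$, $\mathrm{Codim}(H)=n-\dim H$; for $g\in\mathbb{F}_p^n$, $\alpha(H+g)=\mathbb{E}_{x\in H+g}f(x)$; the mean cube density is $b(H)=\mathbb{E}_{g\in\mathbb{F}_p^n}[\alpha(H+g)^3]$. The density of 3-APs with nonzero common difference in $H$ is $\lambda(H)=\mathbb{E}_{x\in\mathbb{F}_p^n}\mathbb{E}_{d\in H\setminus\{0\}}[f(x)f(x+d)f(x+2d)]$. *)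

theory Defs
  imports "Berlekamp_Zassenhaus.Finite_Field" "HOL-Library.Function_Algebras"
begin

text \<open>The vector space F_p^n is modelled as functions 'n \<Rightarrow> 'p mod_ring, with
  'n a finite index type (n = CARD('n)) and 'p a type of prime cardinality p.\<close>

definition Fscale :: "'p::prime_card mod_ring \<Rightarrow> ('n \<Rightarrow> 'p mod_ring) \<Rightarrow> ('n \<Rightarrow> 'p mod_ring)" where
  "Fscale c v = (\<lambda>i. c * v i)"

global_interpretation Fp: vector_space Fscale
  by unfold_locales (auto simp: Fscale_def fun_eq_iff algebra_simps)

definition codim :: "('n::finite \<Rightarrow> 'p::prime_card mod_ring) set \<Rightarrow> nat" where
  "codim H = CARD('n) - Fp.dim H"

definition mean :: "(('n::finite \<Rightarrow> 'p::prime_card mod_ring) \<Rightarrow> real) \<Rightarrow> real" where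
  "mean f = (\<Sum>x\<in>UNIV. f x) / real (CARD('n \<Rightarrow> 'p mod_ring))"

definition coset_density :: "(('n::finite \<Rightarrow> 'p::prime_card mod_ring) \<Rightarrow> real) \<Rightarrow> ('n \<Rightarrow> 'p mod_ring) set \<Rightarrow> ('n \<Rightarrow> 'p mod_ring) \<Rightarrow> real" where
  "coset_density f H g = (\<Sum>x\<in>(\<lambda>h. h + g) ` H. f x) / real (card ((\<lambda>h. h + g) ` H))"

definition mean_cube :: "(('n::finite \<Rightarrow> 'p::prime_card mod_ring) \<Rightarrow> real) \<Rightarrow> ('n \<Rightarrow> 'p mod_ring) set \<Rightarrow> real" where
  "mean_cube f H = (\<Sum>g\<in>UNIV. (coset_density f H g) ^ 3) / real (CARD('n \<Rightarrow> 'p mod_ring))"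

definition ap3_density :: "(('n::finite \<Rightarrow> 'p::prime_card mod_ring) \<Rightarrow> real) \<Rightarrow> ('n \<Rightarrow> 'p mod_ring) set \<Rightarrow> real" where
  "ap3_density f H = (\<Sum>x\<in>UNIV. (\<Sum>d\<in>H - {0}. f x * f (x + d) * f (x + 2 * d)) / real (card (H - {0})))
      / real (CARD('n \<Rightarrow> 'p mod_ring))"

end

theory Submission
  imports Defs
begin


definition dotp :: "('n::finite \<Rightarrow> 'p::prime_card mod_ring) \<Rightarrow> ('n \<Rightarrow> 'p mod_ring) \<Rightarrow> 'p mod_ring" where
  "dotp u v = (\<Sum>i\<in>UNIV. u i * v i)"

definition ee :: "'p::prime_card mod_ring \<Rightarrow> complex" where
  "ee c = cis (2 * pi * real_of_int (to_int_mod_ring c) / real CARD('p))"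

lemma cis_period: "cis (2 * pi * real_of_int (k mod int m) / real m) = cis (2 * pi * real_of_int k / real m)"
  if "m > 0" for k :: int and m :: nat
proof -
  have k: "k = k mod int m + int m * (k div int m)" by simp
  have "real_of_int k = real_of_int (k mod int m + int m * (k div int m))" by simp
  also have "\<dots> = real_of_int (k mod int m) + real m * real_of_int (k div int m)" by (simp only: of_int_add of_int_mult of_int_of_nat_eq)
  finally have kk: "real_of_int k = real_of_int (k mod int m) + real m * real_of_int (k div int m)" .
  have "2 * pi * real_of_int k / real m = 2 * pi * real_of_int (k mod int m) / real m + 2 * pi * real_of_int (k div int m)"
    using that unfolding kk by (simp add: field_simps)
  then have "cis (2 * pi * real_of_int k / real m) = cis (2 * pi * real_of_int (k mod int m) / real m + 2 * pi * real_of_int (k div int m))"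
    by (rule arg_cong)
  also have "\<dots> = cis (2 * pi * real_of_int (k mod int m) / real m) * cis (2 * pi * real_of_int (k div int m))"
    by (rule cis_mult[symmetric])
  finally have "cis (2 * pi * real_of_int k / real m) = cis (2 * pi * real_of_int (k mod int m) / real m) * cis (2 * pi * real_of_int (k div int m))" .
  also have "cis (2 * pi * real_of_int (k div int m)) = 1"
    by (rule cis_multiple_2pi) simp
  finally show ?thesis by simp
qed

lemma ee_add: "ee (a + b :: 'p::prime_card mod_ring) = ee a * ee b"
proof -
  have "ee (a+b) = cis (2 * pi * real_of_int ((to_int_mod_ring a + to_int_mod_ring b) mod int CARD('p)) / real CARD('p))"
    unfolding ee_def to_int_mod_ring_add by simp
  also have "\<dots> = cis (2 * pi * real_of_int (to_int_mod_ring a + to_int_mod_ring b) / real CARD('p))"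
    by (rule cis_period) simp
  also have "\<dots> = ee a * ee b" unfolding ee_def cis_mult by (simp add: field_simps)
  finally show ?thesis .
qed

lemma ee_zero[simp]: "ee 0 = 1"
  unfolding ee_def by simp

lemma norm_ee[simp]: "norm (ee c) = 1"
  unfolding ee_def by simp

lemma ee_neg: "ee (- c :: 'p::prime_card mod_ring) = cnj (ee c)"
proof -
  have "ee (-c) * ee c = 1" by (simp flip: ee_add)
  moreover have "cnj (ee c) * ee c = 1" 
    by (metis complex_norm_square mult.commute norm_ee of_real_1 power_one)
  moreover have "ee c \<noteq> 0" by (metis norm_ee norm_zero zero_neq_one)
  ultimately show ?thesis by (metis mult_cancel_right)
qed

lemma ee_diff: "ee (a - b) = ee a * cnj (ee b)"
  by (metis ee_add ee_neg diff_conv_add_uminus)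

lemma ee_neq1: fixes c :: "'p::prime_card mod_ring" assumes "c \<noteq> 0" shows "ee c \<noteq> 1"
proof
  assume "ee c = 1"
  let ?k = "to_int_mod_ring c"
  have r: "?k \<in> {0..<int CARD('p)}" using range_to_int_mod_ring by blast
  have "?k \<noteq> 0" using assms by (metis to_int_mod_ring_hom.eq_iff to_int_mod_ring_hom.hom_zero)
  have r1: "0 \<le> ?k" "?k < int CARD('p)" using r by auto
  have k: "0 < ?k" "?k < int CARD('p)" using r1 \<open>?k \<noteq> 0\<close> by linarith+
  from \<open>ee c = 1\<close> have "cos (2 * pi * real_of_int ?k / real CARD('p)) = 1"
    unfolding ee_def by (metis cis.sel(1) one_complex.sel(1))
  then obtain n :: int where n: "2 * pi * real_of_int ?k / real CARD('p) = real_of_int n * 2 * pi"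
    using cos_one_2pi_int by blast
  then have "real_of_int ?k = n * real CARD('p)" by (simp add: field_simps)
  then have "?k = n * int CARD('p)" by (metis of_int_eq_iff of_int_mult of_int_of_nat_eq)
  with k show False
    by (smt (verit, best) mult_le_cancel_right1 mult_nonneg_nonpos of_nat_0_le_iff zero_less_mult_iff)
qed


lemma dotp_add_right: "dotp u (v + w) = dotp u v + dotp u w"
  unfolding dotp_def by (simp add: distrib_left sum.distrib)
lemma dotp_add_left: "dotp (u + v) w = dotp u w + dotp v w"
  unfolding dotp_def by (simp add: distrib_right sum.distrib)
lemma dotp_zero_right[simp]: "dotp u 0 = 0"
  unfolding dotp_def by simp
lemma dotp_zero_left[simp]: "dotp 0 u = 0"
  unfolding dotp_def by simp
lemma dotp_minus_right: "dotp u (- v) = - dotp u v"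
  unfolding dotp_def by (simp add: sum_negf)
lemma dotp_diff_right: "dotp u (v - w) = dotp u v - dotp u w"
  unfolding dotp_def by (simp add: right_diff_distrib sum_subtractf)
lemma dotp_comm: "dotp u v = dotp v u"
  unfolding dotp_def by (simp add: mult.commute)

lemma sum_translate:
  fixes G :: "('n::finite \<Rightarrow> 'p::prime_card mod_ring) set"
  assumes cl: "\<And>x y. x\<in>G \<Longrightarrow> y\<in>G \<Longrightarrow> x+y\<in>G" and h0: "h0 \<in> G"
  shows "(\<Sum>h\<in>G. F (h + h0)) = (\<Sum>h\<in>G. (F h :: 'b::comm_monoid_add))"
proof -
  have inj: "inj_on (\<lambda>h. h + h0) G" by (auto simp: inj_on_def)
  have sub: "(\<lambda>h. h + h0) ` G \<subseteq> G" using cl h0 by auto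
  have "card ((\<lambda>h. h + h0) ` G) = card G" using inj by (simp add: card_image)
  then have eq: "(\<lambda>h. h + h0) ` G = G" using sub by (simp add: card_subset_eq)
  have "(\<Sum>h\<in>G. F (h + h0)) = (\<Sum>h\<in>(\<lambda>h. h + h0) ` G. F h)"
    using inj by (simp add: sum.reindex)
  then show ?thesis using eq by simp
qed

lemma sum_char_zero:
  fixes G :: "('n::finite \<Rightarrow> 'p::prime_card mod_ring) set"
  assumes cl: "\<And>x y. x\<in>G \<Longrightarrow> y\<in>G \<Longrightarrow> x+y\<in>G" and h0: "h0 \<in> G" and nz: "dotp \<xi> h0 \<noteq> 0"
  shows "(\<Sum>h\<in>G. ee (dotp \<xi> h)) = 0"
proof -
  let ?S = "\<Sum>h\<in>G. ee (dotp \<xi> h)"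
  have "(\<Sum>h\<in>G. ee (dotp \<xi> (h + h0))) = ?S" by (rule sum_translate[OF cl h0])
  moreover have "(\<Sum>h\<in>G. ee (dotp \<xi> (h + h0))) = ee (dotp \<xi> h0) * ?S"
    by (simp add: dotp_add_right ee_add sum_distrib_left mult.commute)
  ultimately have "(ee (dotp \<xi> h0) - 1) * ?S = 0" by (simp add: algebra_simps)
  then show ?thesis using ee_neq1[OF nz] by simp
qed

lemma sum_char_UNIV:
  "(\<Sum>\<xi>\<in>(UNIV::('n::finite \<Rightarrow> 'p::prime_card mod_ring) set). ee (dotp \<xi> x)) =
     (if x = 0 then of_nat CARD('n \<Rightarrow> 'p mod_ring) else 0)"
proof (cases "x = 0")
  case True then show ?thesis by simp
next
  case False
  then obtain i where i: "x i \<noteq> 0" by (auto simp: fun_eq_iff)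
  define \<xi>0 :: "'n \<Rightarrow> 'p mod_ring" where "\<xi>0 = (\<lambda>j. if j = i then 1 else 0)"
  have "dotp x \<xi>0 = x i" unfolding dotp_def \<xi>0_def
    by (simp add: if_distrib cong: if_cong)
  then have "(\<Sum>\<xi>\<in>UNIV. ee (dotp x \<xi>)) = 0"
    using i by (intro sum_char_zero[of UNIV \<xi>0 x]) auto
  then show ?thesis using False by (simp add: dotp_comm)
qed


lemma card_span_indep:
  fixes B :: "('n::finite \<Rightarrow> 'p::prime_card mod_ring) set"
  shows "Fp.independent B \<Longrightarrow> card (Fp.span B) = CARD('p) ^ card B"
proof (induction B rule: finite_induct[OF finite])
  case 1
  then show ?case by simp
next
  case (2 x B)
  have indB: "Fp.independent B" using 2(4) Fp.independent_mono by blast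
  have xB: "x \<notin> Fp.span B" using 2(4) by (simp add: Fp.independent_insert 2(2))
  let ?m = "\<lambda>(y, c). y + Fscale c x"
  have eq: "Fp.span (insert x B) = ?m ` (Fp.span B \<times> UNIV)"
  proof (intro equalityI subsetI)
    fix z assume "z \<in> Fp.span (insert x B)"
    then obtain k where k: "z - Fscale k x \<in> Fp.span B" using Fp.span_insert by blast
    then show "z \<in> ?m ` (Fp.span B \<times> UNIV)"
      by (intro image_eqI[where x="(z - Fscale k x, k)"]) auto
  next
    fix z assume "z \<in> ?m ` (Fp.span B \<times> UNIV)"
    then obtain y c where "y \<in> Fp.span B" "z = y + Fscale c x" by auto
    moreover have "Fp.span B \<subseteq> Fp.span (insert x B)" by (rule Fp.span_mono) auto
    moreover have "Fscale c x \<in> Fp.span (insert x B)" by (intro Fp.span_scale Fp.span_base) simp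
    ultimately show "z \<in> Fp.span (insert x B)" using Fp.span_add by blast
  qed
  have inj: "inj_on ?m (Fp.span B \<times> UNIV)"
  proof (rule inj_onI, clarsimp)
    fix y c y' c'
    assume y: "y \<in> Fp.span B" and y': "y' \<in> Fp.span B" and e: "y + Fscale c x = y' + Fscale c' x"
    show "y = y' \<and> c = c'"
    proof (cases "c = c'")
      case True then show ?thesis using e by simp
    next
      case False
      have "Fscale (c - c') x = y' - y" using e by (simp add: Fp.scale_left_diff_distrib algebra_simps)
      then have "Fscale (inverse (c - c')) (Fscale (c - c') x) \<in> Fp.span B"
        using y y' by (simp add: Fp.span_diff Fp.span_scale)
      then have "x \<in> Fp.span B" using False by (simp add: Fp.scale_scale)
      then show ?thesis using xB by simp
    qed
  qed
  have "card (Fp.span (insert x B)) = card (Fp.span B \<times> (UNIV :: 'p mod_ring set))"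
    unfolding eq using inj by (simp add: card_image)
  also have "\<dots> = CARD('p) ^ card B * CARD('p)" using 2(3)[OF indB] by (simp add: card_cartesian_product)
  also have "\<dots> = CARD('p) ^ card (insert x B)" using 2(2) by simp
  finally show ?case .
qed

lemma card_subspace:
  fixes V :: "('n::finite \<Rightarrow> 'p::prime_card mod_ring) set"
  assumes "Fp.subspace V"
  shows "card V = CARD('p) ^ Fp.dim V"
proof -
  obtain B where B: "B \<subseteq> V" "Fp.independent B" "V \<subseteq> Fp.span B" "card B = Fp.dim V"
    using Fp.basis_exists by blast
  have "Fp.span B \<subseteq> V" by (rule Fp.span_minimal[OF B(1) assms])
  then have "Fp.span B = V" using B(3) by (rule antisym)
  then show ?thesis using card_span_indep[OF B(2)] B(4) by simp
qed


lemma dim_UNIV_Fp: "Fp.dim (UNIV :: ('n::finite \<Rightarrow> 'p::prime_card mod_ring) set) = CARD('n)"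
proof -
  have "CARD('p) ^ Fp.dim (UNIV :: ('n \<Rightarrow> 'p mod_ring) set) = CARD('p) ^ CARD('n)"
  proof -
    have "card (UNIV :: ('n \<Rightarrow> 'p mod_ring) set) = CARD('p) ^ Fp.dim (UNIV :: ('n \<Rightarrow> 'p mod_ring) set)"
      by (rule card_subspace) (rule Fp.subspace_UNIV)
    moreover have "card (UNIV :: ('n \<Rightarrow> 'p mod_ring) set) = CARD('p) ^ CARD('n)" by (simp add: card_fun)
    ultimately show ?thesis by simp
  qed
  moreover have "CARD('p) > 1" using prime_card prime_gt_1_nat by blast
  ultimately show ?thesis using power_inject_exp by blast
qed

lemma dim_le_n:
  fixes V :: "('n::finite \<Rightarrow> 'p::prime_card mod_ring) set"
  assumes "Fp.subspace V"
  shows "Fp.dim V \<le> CARD('n)"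
proof -
  have "CARD('p) ^ Fp.dim V \<le> CARD('p) ^ CARD('n)"
    using card_subspace[OF assms] card_mono[of UNIV V] by (simp add: card_fun)
  moreover have "CARD('p) > 1" using prime_card prime_gt_1_nat by blast
  ultimately show ?thesis using power_le_imp_le_exp by blast
qed


lemma dotp_scale_right: "dotp u (Fscale c v) = c * dotp u v"
  unfolding dotp_def Fscale_def by (simp add: sum_distrib_left algebra_simps)
lemma dotp_minus_left: "dotp (- u) v = - dotp u v"
  unfolding dotp_def by (simp add: sum_negf)

definition Zs :: "('n::finite \<Rightarrow> 'p::prime_card mod_ring) set \<Rightarrow> ('n \<Rightarrow> 'p mod_ring) set" where
  "Zs H = {\<xi>. \<forall>h\<in>H. dotp \<xi> h = 0}"

definition SS :: "('n::finite \<Rightarrow> 'p::prime_card mod_ring) set \<Rightarrow> (('n \<Rightarrow> 'p mod_ring) \<Rightarrow> real) \<Rightarrow> ('n \<Rightarrow> 'p mod_ring) \<Rightarrow> complex" where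
  "SS H \<phi> \<xi> = (\<Sum>h\<in>H. complex_of_real (\<phi> h) * ee (dotp \<xi> h))"

lemma ee_dotp_diff: "ee (dotp \<xi> h) * cnj (ee (dotp \<xi> h')) = ee (dotp \<xi> (h - h'))"
  by (simp add: dotp_diff_right ee_diff)

lemma parseval:
  fixes H :: "('n::finite \<Rightarrow> 'p::prime_card mod_ring) set"
  shows "(\<Sum>\<xi>\<in>UNIV. (cmod (SS H \<phi> \<xi>))^2) = real CARD('n \<Rightarrow> 'p mod_ring) * (\<Sum>h\<in>H. (\<phi> h)^2)"
proof -
  let ?N = "CARD('n \<Rightarrow> 'p mod_ring)"
  have fin: "finite H" by simp
  have "complex_of_real (\<Sum>\<xi>\<in>UNIV. (cmod (SS H \<phi> \<xi>))^2) = (\<Sum>\<xi>\<in>UNIV. SS H \<phi> \<xi> * cnj (SS H \<phi> \<xi>))"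
    by (simp only: of_real_sum complex_norm_square)
  also have "\<dots> = (\<Sum>\<xi>\<in>UNIV. \<Sum>h\<in>H. \<Sum>h'\<in>H. complex_of_real (\<phi> h * \<phi> h') * ee (dotp \<xi> (h - h')))"
    unfolding SS_def cnj_sum sum_product
    by (intro sum.cong refl) (simp add: ee_dotp_diff[symmetric] mult_ac)
  also have "\<dots> = (\<Sum>h\<in>H. \<Sum>h'\<in>H. complex_of_real (\<phi> h * \<phi> h') * (\<Sum>\<xi>\<in>UNIV. ee (dotp \<xi> (h - h'))))"
    by (simp add: sum.swap[of _ UNIV] sum_distrib_left)
  also have "\<dots> = (\<Sum>h\<in>H. \<Sum>h'\<in>H. if h' = h then complex_of_real (\<phi> h * \<phi> h') * of_nat ?N else 0)"
    by (intro sum.cong refl) (auto simp: sum_char_UNIV)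
  also have "\<dots> = (\<Sum>h\<in>H. complex_of_real (\<phi> h * \<phi> h) * of_nat ?N)"
    by (intro sum.cong refl) (simp add: sum.delta)
  also have "\<dots> = complex_of_real (real ?N * (\<Sum>h\<in>H. (\<phi> h)^2))"
    by (simp add: sum_distrib_left power2_eq_square mult_ac)
  finally show ?thesis by (simp only: of_real_eq_iff)
qed

context
  fixes H :: "('n::finite \<Rightarrow> 'p::prime_card mod_ring) set"
  assumes Hsub: "Fp.subspace H"
begin

lemma H0: "0 \<in> H" using Hsub by (simp add: Fp.subspace_def)
lemma Hadd: "x \<in> H \<Longrightarrow> y \<in> H \<Longrightarrow> x + y \<in> H" using Hsub by (simp add: Fp.subspace_def)
lemma Hneg: "x \<in> H \<Longrightarrow> - x \<in> H"
proof -
  assume "x \<in> H"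
  then have "Fscale (-1) x \<in> H" using Hsub unfolding Fp.subspace_def by blast
  moreover have "Fscale (-1) x = - x" by (simp add: Fscale_def fun_eq_iff)
  ultimately show ?thesis by simp
qed
lemma Hdiff: "x \<in> H \<Longrightarrow> y \<in> H \<Longrightarrow> x - y \<in> H"
  using Hadd[of x "- y"] Hneg[of y] by simp

lemma sum_char_H: "(\<Sum>h\<in>H. ee (dotp \<xi> h)) = (if \<xi> \<in> Zs H then of_nat (card H) else 0)"
proof (cases "\<xi> \<in> Zs H")
  case True then show ?thesis by (simp add: Zs_def)
next
  case False
  then obtain h0 where "h0 \<in> H" "dotp \<xi> h0 \<noteq> 0" by (auto simp: Zs_def)
  then show ?thesis using False by (simp add: sum_char_zero[OF Hadd])
qed

lemma N_eq: "CARD('n \<Rightarrow> 'p mod_ring) = card H * card (Zs H)"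
proof -
  have "(\<Sum>\<xi>\<in>UNIV. \<Sum>h\<in>H. ee (dotp \<xi> h)) = (\<Sum>h\<in>H. \<Sum>\<xi>\<in>UNIV. ee (dotp \<xi> h))"
    by (rule sum.swap)
  also have "\<dots> = (\<Sum>h\<in>H. if h = 0 then of_nat CARD('n \<Rightarrow> 'p mod_ring) else 0)"
    by (simp add: sum_char_UNIV)
  also have "\<dots> = of_nat CARD('n \<Rightarrow> 'p mod_ring)" using H0 by (simp add: sum.delta)
  finally have 1: "(\<Sum>\<xi>\<in>UNIV. \<Sum>h\<in>H. ee (dotp \<xi> h)) = of_nat CARD('n \<Rightarrow> 'p mod_ring)" .
  have "(\<Sum>\<xi>\<in>UNIV. \<Sum>h\<in>H. ee (dotp \<xi> h)) = (\<Sum>\<xi>\<in>UNIV. if \<xi> \<in> Zs H then of_nat (card H) else 0)"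
    by (simp add: sum_char_H)
  also have "\<dots> = of_nat (card H * card (Zs H))"
    by (simp add: sum.If_cases Int_absorb1 mult.commute)
  finally have "(of_nat CARD('n \<Rightarrow> 'p mod_ring) :: complex) = of_nat (card H * card (Zs H))" using 1 by simp
  then show ?thesis by (simp only: of_nat_eq_iff)
qed

lemma SS_Z: "\<xi> \<in> Zs H \<Longrightarrow> SS H \<phi> \<xi> = complex_of_real (\<Sum>h\<in>H. \<phi> h)"
  unfolding SS_def Zs_def by simp

lemma SS_nonZ_bound:
  assumes "\<xi> \<notin> Zs H" and "\<And>x. \<phi> x \<le> 1"
  shows "cmod (SS H \<phi> \<xi>) \<le> real (card H) - (\<Sum>h\<in>H. \<phi> h)"
proof -
  have "SS H \<phi> \<xi> = (\<Sum>h\<in>H. complex_of_real (\<phi> h - 1) * ee (dotp \<xi> h)) + (\<Sum>h\<in>H. ee (dotp \<xi> h))"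
    unfolding SS_def by (simp add: sum.distrib[symmetric] algebra_simps)
  also have "(\<Sum>h\<in>H. ee (dotp \<xi> h)) = 0" using assms(1) by (simp add: sum_char_H)
  finally have "cmod (SS H \<phi> \<xi>) = cmod (\<Sum>h\<in>H. complex_of_real (\<phi> h - 1) * ee (dotp \<xi> h))" by simp
  also have "\<dots> \<le> (\<Sum>h\<in>H. cmod (complex_of_real (\<phi> h - 1) * ee (dotp \<xi> h)))" by (rule norm_sum)
  also have "\<dots> = (\<Sum>h\<in>H. 1 - \<phi> h)" 
  proof (intro sum.cong refl)
    fix h assume "h \<in> H"
    have "cmod (complex_of_real (\<phi> h - 1) * ee (dotp \<xi> h)) = \<bar>\<phi> h - 1\<bar>"
      by (simp only: norm_mult norm_ee norm_of_real mult_1_right)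
    then show "cmod (complex_of_real (\<phi> h - 1) * ee (dotp \<xi> h)) = 1 - \<phi> h" using assms(2)[of h] by simp
  qed
  also have "\<dots> = real (card H) - (\<Sum>h\<in>H. \<phi> h)" by (simp add: sum_subtractf)
  finally show ?thesis .
qed

lemma ee3: "ee (dotp \<xi> a) * ee (dotp \<xi> b) * ee (dotp (- (\<xi> + \<xi>)) c) = ee (dotp \<xi> (a + b - (c + c)))"
proof -
  have 1: "dotp (- (\<xi> + \<xi>)) c = - (dotp \<xi> c + dotp \<xi> c)" by (simp only: dotp_minus_left dotp_add_left)
  have 2: "dotp \<xi> (a + b - (c + c)) = dotp \<xi> a + dotp \<xi> b + - (dotp \<xi> c + dotp \<xi> c)"
    by (simp only: dotp_diff_right dotp_add_right diff_conv_add_uminus dotp_minus_right)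
  show ?thesis by (simp only: 1 2 ee_add)
qed

lemma ap_identity:
  "(\<Sum>\<xi>\<in>UNIV. (SS H \<phi> \<xi>)^2 * SS H \<phi> (- (\<xi> + \<xi>))) =
     of_nat CARD('n \<Rightarrow> 'p mod_ring) * complex_of_real (\<Sum>h\<in>H. \<Sum>d\<in>H. \<phi> h * \<phi> (h + d) * \<phi> (h + d + d))"
proof -
  let ?N = "CARD('n \<Rightarrow> 'p mod_ring)"
  let ?c = "\<lambda>a b c. complex_of_real (\<phi> a * \<phi> b * \<phi> c)"
  have e1: "(SS H \<phi> \<xi>)^2 * SS H \<phi> (- (\<xi> + \<xi>)) = (\<Sum>a\<in>H. \<Sum>b\<in>H. \<Sum>c\<in>H. ?c a b c * ee (dotp \<xi> (a + b - (c + c))))" for \<xi>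
  proof -
    have "(SS H \<phi> \<xi>)^2 * SS H \<phi> (- (\<xi> + \<xi>)) = (\<Sum>a\<in>H. \<Sum>b\<in>H. (complex_of_real (\<phi> a) * ee (dotp \<xi> a)) * (complex_of_real (\<phi> b) * ee (dotp \<xi> b))) * SS H \<phi> (- (\<xi> + \<xi>))"
      unfolding power2_eq_square SS_def sum_product by simp
    also have "\<dots> = (\<Sum>a\<in>H. \<Sum>b\<in>H. \<Sum>c\<in>H. (complex_of_real (\<phi> a) * ee (dotp \<xi> a)) * (complex_of_real (\<phi> b) * ee (dotp \<xi> b)) * (complex_of_real (\<phi> c) * ee (dotp (- (\<xi> + \<xi>)) c)))"
      unfolding SS_def[of H \<phi> "- (\<xi> + \<xi>)"] sum_distrib_right unfolding sum_distrib_left by (rule refl)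
    also have "\<dots> = (\<Sum>a\<in>H. \<Sum>b\<in>H. \<Sum>c\<in>H. ?c a b c * ee (dotp \<xi> (a + b - (c + c))))"
      by (intro sum.cong refl, subst ee3[symmetric]) (simp only: of_real_mult mult_ac)
    finally show ?thesis .
  qed
  have "(\<Sum>\<xi>\<in>UNIV. (SS H \<phi> \<xi>)^2 * SS H \<phi> (- (\<xi> + \<xi>))) = (\<Sum>a\<in>H. \<Sum>b\<in>H. \<Sum>c\<in>H. ?c a b c * (\<Sum>\<xi>\<in>UNIV. ee (dotp \<xi> (a + b - (c + c)))))"
    unfolding e1 sum_distrib_left
    by (subst sum.swap, rule sum.cong, rule refl, subst sum.swap, rule sum.cong, rule refl, subst sum.swap, rule refl)
  also have "\<dots> = (\<Sum>a\<in>H. \<Sum>c\<in>H. \<Sum>b\<in>H. if b = c + c - a then ?c a b c * of_nat ?N else 0)"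
    by (subst (2) sum.swap) (intro sum.cong refl, auto simp: sum_char_UNIV algebra_simps)
  also have "\<dots> = (\<Sum>a\<in>H. \<Sum>c\<in>H. ?c a (c + c - a) c * of_nat ?N)"
  proof (intro sum.cong refl)
    fix a c assume "a \<in> H" "c \<in> H"
    then have "c + c - a \<in> H" by (intro Hdiff Hadd)
    then show "(\<Sum>b\<in>H. if b = c + c - a then ?c a b c * of_nat ?N else 0) = ?c a (c + c - a) c * of_nat ?N"
      by (subst sum.delta[OF finite]) (simp only: if_True)
  qed
  also have "\<dots> = (\<Sum>a\<in>H. \<Sum>d\<in>H. ?c a ((d + a) + (d + a) - a) (d + a) * of_nat ?N)"
    by (rule sum.cong[OF refl], rule sum_translate[OF Hadd, symmetric], assumption+)
  also have "\<dots> = of_nat ?N * complex_of_real (\<Sum>h\<in>H. \<Sum>d\<in>H. \<phi> h * \<phi> (h + d) * \<phi> (h + d + d))"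
    by (simp add: sum_distrib_left algebra_simps)
  finally show ?thesis .
qed

lemma Z_neg2:
  fixes \<xi> h :: "'n \<Rightarrow> 'p mod_ring"
  assumes two: "(2::'p mod_ring) \<noteq> 0"
  shows "dotp (- (\<xi> + \<xi>)) h = 0 \<longleftrightarrow> dotp \<xi> h = 0"
proof -
  have "dotp (- (\<xi> + \<xi>)) h = - (dotp \<xi> h + dotp \<xi> h)" by (simp only: dotp_minus_left dotp_add_left)
  also have "dotp \<xi> h + dotp \<xi> h = 2 * dotp \<xi> h" by (rule mult_2[symmetric])
  finally have "dotp (- (\<xi> + \<xi>)) h = - (2 * dotp \<xi> h)" .
  then show ?thesis using two by simp
qed

lemma W_translate:
  assumes hH: "h' \<in> H" and z: "dotp \<xi> h' = 0"
  shows "(\<Sum>h\<in>H. complex_of_real (\<phi> (h + h')) * ee (dotp \<xi> h)) = SS H \<phi> \<xi>"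
proof -
  have "(\<Sum>h\<in>H. complex_of_real (\<phi> (h + h')) * ee (dotp \<xi> h)) = (\<Sum>h\<in>H. complex_of_real (\<phi> (h + h')) * ee (dotp \<xi> (h + h')))"
    using z by (simp add: dotp_add_right)
  also have "\<dots> = SS H \<phi> \<xi>" unfolding SS_def by (rule sum_translate[OF Hadd hH])
  finally show ?thesis .
qed

lemma SS_avg:
  assumes H'sub: "H' \<subseteq> H" and H'0: "0 \<in> H'" and W: "\<forall>h\<in>H'. dotp \<xi> h = 0" and nZ: "\<xi> \<notin> Zs H"
  shows "SS H (\<lambda>h. (\<Sum>h'\<in>H'. \<phi> (h + h')) / real (card H') - c) \<xi> = SS H \<phi> \<xi>"
proof -
  have fin: "finite H'" by simp
  have cH': "card H' > 0" using H'0 fin card_gt_0_iff by blast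
  have "SS H (\<lambda>h. (\<Sum>h'\<in>H'. \<phi> (h + h')) / real (card H') - c) \<xi> =
     (\<Sum>h\<in>H. complex_of_real ((\<Sum>h'\<in>H'. \<phi> (h + h')) / real (card H')) * ee (dotp \<xi> h)) - complex_of_real c * (\<Sum>h\<in>H. ee (dotp \<xi> h))"
    unfolding SS_def by (simp only: of_real_diff left_diff_distrib sum_subtractf sum_distrib_left mult.assoc)
  also have "(\<Sum>h\<in>H. ee (dotp \<xi> h)) = 0" using nZ by (simp add: sum_char_H)
  also have "(\<Sum>h\<in>H. complex_of_real ((\<Sum>h'\<in>H'. \<phi> (h + h')) / real (card H')) * ee (dotp \<xi> h)) =
      (\<Sum>h'\<in>H'. \<Sum>h\<in>H. complex_of_real (\<phi> (h + h')) * ee (dotp \<xi> h)) / of_nat (card H')"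
    by (simp add: sum_divide_distrib sum_distrib_right sum.swap[of _ H'])
  also have "\<dots> = (\<Sum>h'\<in>H'. SS H \<phi> \<xi>) / of_nat (card H')"
    using H'sub W by (intro arg_cong[where f="\<lambda>x. x / _"] sum.cong refl W_translate) auto
  also have "\<dots> = SS H \<phi> \<xi>" using cH' H'0 by auto
  finally show ?thesis by (simp only: mult_zero_right diff_zero)
qed

lemma deficit:
  fixes \<phi> :: "('n \<Rightarrow> 'p mod_ring) \<Rightarrow> real"
  assumes \<phi>01: "\<And>x. 0 \<le> \<phi> x \<and> \<phi> x \<le> 1" and H'sub: "H' \<subseteq> H" and H'0: "0 \<in> H'"
    and \<delta>0: "\<delta> \<ge> 0"
    and large: "\<And>\<eta>. \<eta> \<notin> Zs H \<Longrightarrow> real (card H) * \<delta> \<le> cmod (SS H \<phi> \<eta>) \<Longrightarrow> \<forall>h\<in>H'. dotp \<eta> h = 0"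
    and two: "(2::'p mod_ring) \<noteq> 0"
  defines "a \<equiv> (\<Sum>h\<in>H. \<phi> h) / real (card H)"
  defines "\<psi> \<equiv> (\<lambda>h. (\<Sum>h'\<in>H'. \<phi> (h + h')) / real (card H') - a)"
  shows "real (card H)^2 * a^3 - (\<Sum>h\<in>H. \<Sum>d\<in>H. \<phi> h * \<phi> (h + d) * \<phi> (h + d + d))
          \<le> real (card H)^2 * (\<delta> * (1 - a)) + real (card H) * (1 - a) * (\<Sum>h\<in>H. (\<psi> h)^2)"
proof -
  let ?N = "CARD('n \<Rightarrow> 'p mod_ring)"
  let ?K = "card H"
  let ?z = "card (Zs H)"
  let ?S = "SS H \<phi>"
  let ?T = "\<Sum>h\<in>H. \<Sum>d\<in>H. \<phi> h * \<phi> (h + d) * \<phi> (h + d + d)"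
  let ?n = "\<lambda>\<xi>::'n \<Rightarrow> 'p mod_ring. - (\<xi> + \<xi>)"
  have K0: "?K > 0" using H0 by (auto simp: card_gt_0_iff)
  have N_eq': "real ?N = real ?K * real ?z" using N_eq by simp
  have sphi: "(\<Sum>h\<in>H. \<phi> h) = real ?K * a" unfolding a_def using K0 by simp
  have a01: "0 \<le> a" "a \<le> 1"
  proof -
    have "(\<Sum>h\<in>H. \<phi> h) \<le> (\<Sum>h\<in>H. 1)" using \<phi>01 by (intro sum_mono) auto
    then have "real ?K * a \<le> real ?K" using sphi by simp
    then show "a \<le> 1" using K0 by simp
    have "0 \<le> (\<Sum>h\<in>H. \<phi> h)" using \<phi>01 by (intro sum_nonneg) auto
    then show "0 \<le> a" using sphi K0 by (auto simp: zero_le_mult_iff card_gt_0_iff)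
  qed
  have nZ: "\<xi> \<in> Zs H \<longleftrightarrow> ?n \<xi> \<in> Zs H" for \<xi>
    unfolding Zs_def using Z_neg2[OF two] by simp
  have SZ: "\<xi> \<in> Zs H \<Longrightarrow> ?S \<xi> = complex_of_real (real ?K * a)" for \<xi>
    using SS_Z[of \<xi> \<phi>] sphi by (simp only: of_real_sum[symmetric])
  define R where "R = (\<Sum>\<xi>\<in>UNIV - Zs H. (?S \<xi>)^2 * ?S (?n \<xi>))"
  have "of_nat ?N * complex_of_real ?T = (\<Sum>\<xi>\<in>UNIV. (?S \<xi>)^2 * ?S (?n \<xi>))"
    by (rule ap_identity[symmetric])
  also have "\<dots> = (\<Sum>\<xi>\<in>Zs H. (?S \<xi>)^2 * ?S (?n \<xi>)) + R"
    unfolding R_def by (subst sum.subset_diff[of "Zs H" UNIV]) (auto simp: add.commute)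
  also have "(\<Sum>\<xi>\<in>Zs H. (?S \<xi>)^2 * ?S (?n \<xi>)) = of_nat ?z * complex_of_real ((real ?K * a)^3)"
    using SZ nZ by (simp add: power3_eq_cube power2_eq_square)
  finally have eqR: "of_nat ?N * complex_of_real ?T = of_nat ?z * complex_of_real ((real ?K * a)^3) + R" .
  have keyR: "real ?N * (real ?K^2 * a^3 - ?T) = - Re R"
  proof -
    have r1: "real ?N * (real ?K^2 * a^3) = real ?z * (real ?K * a)^3"
      using N_eq' by (simp add: power3_eq_cube power2_eq_square mult_ac)
    have "complex_of_real (real ?N * (real ?K^2 * a^3 - ?T)) = complex_of_real (real ?z * (real ?K * a)^3) - complex_of_real (real ?N * ?T)"
      by (simp only: right_diff_distrib r1 of_real_diff)
    also have "\<dots> = of_nat ?z * complex_of_real ((real ?K * a)^3) - of_nat ?N * complex_of_real ?T"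
      by (simp only: of_real_mult of_real_of_nat_eq)
    also have "\<dots> = - R" using eqR by simp
    finally have e: "complex_of_real (real ?N * (real ?K^2 * a^3 - ?T)) = - R" .
    show ?thesis using arg_cong[OF e, of Re] by (simp only: Re_complex_of_real uminus_complex.sel)
  qed
  define W where "W = {\<xi>. \<forall>h\<in>H'. dotp \<xi> h = 0}"
  have bnd: "\<xi> \<notin> Zs H \<Longrightarrow> cmod (?S \<xi>) \<le> real ?K * (1 - a)" for \<xi>
    using SS_nonZ_bound[of \<xi> \<phi>] \<phi>01 sphi by (simp add: algebra_simps)
  have pw: "(cmod (?S \<xi>))^2 * cmod (?S (?n \<xi>)) \<le> real ?K * \<delta> * (cmod (?S \<xi>))^2 + real ?K * (1 - a) * (if \<xi> \<in> W then (cmod (?S \<xi>))^2 else 0)"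
    if \<xi>Z: "\<xi> \<notin> Zs H" for \<xi>
  proof -
    have nZ': "?n \<xi> \<notin> Zs H" using nZ \<xi>Z by blast
    have x0: "0 \<le> (cmod (?S \<xi>))^2" by simp
    have t0: "0 \<le> real ?K * (1 - a) * (if \<xi> \<in> W then (cmod (?S \<xi>))^2 else 0)" using a01 by simp
    have t1: "0 \<le> real ?K * \<delta> * (cmod (?S \<xi>))^2" using \<delta>0 by simp
    show ?thesis
    proof (cases "real ?K * \<delta> \<le> cmod (?S (?n \<xi>))")
      case False
      then have "(cmod (?S \<xi>))^2 * cmod (?S (?n \<xi>)) \<le> (cmod (?S \<xi>))^2 * (real ?K * \<delta>)"
        using x0 by (intro mult_left_mono) auto
      then show ?thesis using t0 by (simp add: mult_ac)
    next
      case True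
      then have "\<forall>h\<in>H'. dotp (?n \<xi>) h = 0" using large[OF nZ'] by blast
      then have "\<xi> \<in> W" unfolding W_def using Z_neg2[OF two] by simp
      have "(cmod (?S \<xi>))^2 * cmod (?S (?n \<xi>)) \<le> (cmod (?S \<xi>))^2 * (real ?K * (1 - a))"
        using x0 bnd[OF nZ'] by (intro mult_left_mono) auto
      then show ?thesis using t1 \<open>\<xi> \<in> W\<close> by (simp add: mult_ac)
    qed
  qed
  have "- Re R \<le> cmod R" by (metis abs_Re_le_cmod abs_le_iff)
  also have "cmod R \<le> (\<Sum>\<xi>\<in>UNIV - Zs H. cmod ((?S \<xi>)^2 * ?S (?n \<xi>)))"
    unfolding R_def by (rule norm_sum)
  also have "\<dots> = (\<Sum>\<xi>\<in>UNIV - Zs H. (cmod (?S \<xi>))^2 * cmod (?S (?n \<xi>)))"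
    by (simp add: norm_mult norm_power)
  also have "\<dots> \<le> (\<Sum>\<xi>\<in>UNIV - Zs H. real ?K * \<delta> * (cmod (?S \<xi>))^2 + real ?K * (1 - a) * (if \<xi> \<in> W then (cmod (?S \<xi>))^2 else 0))"
    using pw by (intro sum_mono) auto
  also have "\<dots> = real ?K * \<delta> * (\<Sum>\<xi>\<in>UNIV - Zs H. (cmod (?S \<xi>))^2) + real ?K * (1 - a) * (\<Sum>\<xi>\<in>UNIV - Zs H. (if \<xi> \<in> W then (cmod (?S \<xi>))^2 else 0))"
    by (simp add: sum.distrib sum_distrib_left)
  finally have main: "- Re R \<le> real ?K * \<delta> * (\<Sum>\<xi>\<in>UNIV - Zs H. (cmod (?S \<xi>))^2) + real ?K * (1 - a) * (\<Sum>\<xi>\<in>UNIV - Zs H. (if \<xi> \<in> W then (cmod (?S \<xi>))^2 else 0))" .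
  have N0: "real ?N > 0" by simp
  have P1: "(\<Sum>\<xi>\<in>UNIV - Zs H. (cmod (?S \<xi>))^2) \<le> real ?N * real ?K * (1 - a)"
  proof -
    have "(\<Sum>\<xi>\<in>UNIV. (cmod (?S \<xi>))^2) = (\<Sum>\<xi>\<in>UNIV - Zs H. (cmod (?S \<xi>))^2) + (\<Sum>\<xi>\<in>Zs H. (cmod (?S \<xi>))^2)"
      by (rule sum.subset_diff) auto
    moreover have "(\<Sum>\<xi>\<in>Zs H. (cmod (?S \<xi>))^2) = real ?z * (real ?K * a)^2"
      using SZ a01 by (simp add: norm_mult)
    moreover have "(\<Sum>\<xi>\<in>UNIV. (cmod (?S \<xi>))^2) = real ?N * (\<Sum>h\<in>H. (\<phi> h)^2)" by (rule parseval)
    moreover have "(\<Sum>h\<in>H. (\<phi> h)^2) \<le> (\<Sum>h\<in>H. \<phi> h)"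
    proof (intro sum_mono)
      fix h show "(\<phi> h)^2 \<le> \<phi> h" using \<phi>01[of h] by (simp add: power2_eq_square mult_left_le)
    qed
    ultimately have "(\<Sum>\<xi>\<in>UNIV - Zs H. (cmod (?S \<xi>))^2) \<le> real ?N * (real ?K * a) - real ?z * (real ?K * a)^2"
      using sphi N0 by (smt (verit, ccfv_SIG) mult_left_mono)
    also have "\<dots> = real ?N * real ?K * a * (1 - a)"
      using N_eq' by (simp add: power2_eq_square algebra_simps)
    also have "\<dots> \<le> real ?N * real ?K * (1 - a)"
    proof -
      have "a * (1 - a) \<le> 1 - a" using a01 by (simp add: mult_left_le_one_le)
      then show ?thesis using N0 by (simp add: mult.assoc mult_left_mono)
    qed
    finally show ?thesis .
  qed
  have P2: "(\<Sum>\<xi>\<in>UNIV - Zs H. (if \<xi> \<in> W then (cmod (?S \<xi>))^2 else 0)) \<le> real ?N * (\<Sum>h\<in>H. (\<psi> h)^2)"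
  proof -
    have "(\<Sum>\<xi>\<in>UNIV - Zs H. (if \<xi> \<in> W then (cmod (?S \<xi>))^2 else 0)) \<le> (\<Sum>\<xi>\<in>UNIV - Zs H. (cmod (SS H \<psi> \<xi>))^2)"
    proof (intro sum_mono)
      fix \<xi> assume "\<xi> \<in> UNIV - Zs H"
      then show "(if \<xi> \<in> W then (cmod (?S \<xi>))^2 else 0) \<le> (cmod (SS H \<psi> \<xi>))^2"
        using SS_avg[OF H'sub H'0, of \<xi> \<phi> a] unfolding W_def \<psi>_def by auto
    qed
    also have "\<dots> \<le> (\<Sum>\<xi>\<in>UNIV. (cmod (SS H \<psi> \<xi>))^2)"
      by (intro sum_mono2) auto
    also have "\<dots> = real ?N * (\<Sum>h\<in>H. (\<psi> h)^2)" by (rule parseval)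
    finally show ?thesis .
  qed
  have "real ?N * (real ?K^2 * a^3 - ?T) \<le> real ?K * \<delta> * (real ?N * real ?K * (1 - a)) + real ?K * (1 - a) * (real ?N * (\<Sum>h\<in>H. (\<psi> h)^2))"
    unfolding keyR using main P1 P2 \<delta>0 a01
    by (smt (verit, ccfv_SIG) mult_left_mono of_nat_0_le_iff zero_le_mult_iff)
  also have "\<dots> = real ?N * (real ?K^2 * (\<delta> * (1 - a)) + real ?K * (1 - a) * (\<Sum>h\<in>H. (\<psi> h)^2))"
    by (simp add: algebra_simps power2_eq_square)
  finally show ?thesis using N0 by (simp only: mult_le_cancel_left_pos)
qed

end



definition rr :: "('n::finite \<Rightarrow> 'p::prime_card mod_ring) set \<Rightarrow> ('n \<Rightarrow> 'p mod_ring) \<Rightarrow> ('n \<Rightarrow> 'p mod_ring) \<Rightarrow> 'p mod_ring" where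
  "rr H \<eta> = (\<lambda>h. if h \<in> H then dotp \<eta> h else 0)"

lemma dotp_diff_left: "dotp (u - v) w = dotp u w - dotp v w"
  unfolding dotp_def by (simp add: left_diff_distrib sum_subtractf)

context
  fixes H :: "('n::finite \<Rightarrow> 'p::prime_card mod_ring) set"
  assumes Hsub: "Fp.subspace H"
begin

lemma rr_eq_iff: "rr H \<xi> = rr H \<eta> \<longleftrightarrow> \<xi> - \<eta> \<in> Zs H"
  unfolding rr_def Zs_def fun_eq_iff by (auto simp: dotp_diff_left)

lemma SS_rr: "rr H \<xi> = rr H \<eta> \<Longrightarrow> SS H \<phi> \<xi> = SS H \<phi> \<eta>"
  unfolding SS_def rr_def fun_eq_iff by (intro sum.cong refl) metis

lemma SS_shift:
  assumes "g - g0 \<in> H"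
  shows "cmod (SS H (\<lambda>h. f (g + h)) \<eta>) = cmod (SS H (\<lambda>h. f (g0 + h)) \<eta>)"
proof -
  let ?u = "g - g0"
  have "SS H (\<lambda>h. f (g0 + h)) \<eta> = (\<Sum>h\<in>H. complex_of_real (f (g0 + (h + ?u))) * ee (dotp \<eta> (h + ?u)))"
    unfolding SS_def by (rule sum_translate[OF Hadd[OF Hsub] assms, symmetric])
  also have "\<dots> = ee (dotp \<eta> ?u) * SS H (\<lambda>h. f (g + h)) \<eta>"
    unfolding SS_def sum_distrib_left
  proof (intro sum.cong refl)
    fix h
    have 1: "ee (dotp \<eta> (h + ?u)) = ee (dotp \<eta> h) * ee (dotp \<eta> ?u)" by (simp only: dotp_add_right ee_add)
    have 2: "g0 + (h + ?u) = g + h" by (simp add: algebra_simps)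
    show "complex_of_real (f (g0 + (h + ?u))) * ee (dotp \<eta> (h + ?u)) = ee (dotp \<eta> ?u) * (complex_of_real (f (g + h)) * ee (dotp \<eta> h))"
      by (simp only: 1 2 mult_ac)
  qed
  finally show ?thesis by (simp add: norm_mult)
qed

lemma count_large:
  fixes f :: "('n \<Rightarrow> 'p mod_ring) \<Rightarrow> real"
  assumes \<delta>0: "\<delta> > 0" and f1: "\<And>x. 0 \<le> f x \<and> f x \<le> 1"
    and L: "L \<subseteq> {\<eta>. \<exists>g. real (card H) * \<delta> \<le> cmod (SS H (\<lambda>h. f (g + h)) \<eta>)}"
  shows "real (card (rr H ` L)) * real (card H) * \<delta>^2 \<le> real CARD('n \<Rightarrow> 'p mod_ring)"
proof -
  let ?N = "CARD('n \<Rightarrow> 'p mod_ring)"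
  let ?K = "card H"
  let ?z = "card (Zs H)"
  let ?Rs = "rr H ` L"
  let ?c = "\<lambda>(g, \<xi>). (cmod (SS H (\<lambda>h. f (g + h)) \<xi>))^2"
  have K0: "?K > 0" using H0[OF Hsub] by (auto simp: card_gt_0_iff)
  have "\<forall>\<rho>\<in>?Rs. \<exists>p. fst p \<in> L \<and> rr H (fst p) = \<rho> \<and> real ?K * \<delta> \<le> cmod (SS H (\<lambda>h. f (snd p + h)) (fst p))"
  proof
    fix \<rho> assume "\<rho> \<in> ?Rs"
    then obtain \<eta> where \<eta>: "\<eta> \<in> L" "rr H \<eta> = \<rho>" by auto
    then obtain g where "real ?K * \<delta> \<le> cmod (SS H (\<lambda>h. f (g + h)) \<eta>)" using L by auto
    then show "\<exists>p. fst p \<in> L \<and> rr H (fst p) = \<rho> \<and> real ?K * \<delta> \<le> cmod (SS H (\<lambda>h. f (snd p + h)) (fst p))"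
      using \<eta> by (intro exI[where x="(\<eta>, g)"]) simp
  qed
  from bchoice[OF this] obtain P where P0: "\<forall>\<rho>\<in>?Rs. fst (P \<rho>) \<in> L \<and> rr H (fst (P \<rho>)) = \<rho> \<and> real ?K * \<delta> \<le> cmod (SS H (\<lambda>h. f (snd (P \<rho>) + h)) (fst (P \<rho>)))"
    by (elim exE)
  have P: "fst (P \<rho>) \<in> L \<and> rr H (fst (P \<rho>)) = \<rho> \<and> real ?K * \<delta> \<le> cmod (SS H (\<lambda>h. f (snd (P \<rho>) + h)) (fst (P \<rho>)))"
    if "\<rho> \<in> ?Rs" for \<rho> using P0 that by (rule bspec)
  define B where "B = (\<lambda>\<rho>. {g. g - snd (P \<rho>) \<in> H} \<times> {\<xi>. rr H \<xi> = \<rho>})"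
  have cardB: "card (B \<rho>) = ?K * ?z" if "\<rho> \<in> ?Rs" for \<rho>
  proof -
    let ?g0 = "snd (P \<rho>)" and ?\<eta> = "fst (P \<rho>)"
    have e1: "{g. g - ?g0 \<in> H} = (\<lambda>h. h + ?g0) ` H"
    proof (intro equalityI subsetI)
      fix g assume "g \<in> {g. g - ?g0 \<in> H}"
      then have m: "g - ?g0 \<in> H" by simp
      show "g \<in> (\<lambda>h. h + ?g0) ` H"
      proof (rule image_eqI[where x="g - ?g0"])
        show "g = g - ?g0 + ?g0" by simp
      qed (rule m)
    next
      fix g assume "g \<in> (\<lambda>h. h + ?g0) ` H"
      then obtain h where "h \<in> H" "g = h + ?g0" by (rule imageE)
      then show "g \<in> {g. g - ?g0 \<in> H}" by simp
    qed
    have e2: "{\<xi>. rr H \<xi> = \<rho>} = (\<lambda>\<zeta>. \<zeta> + ?\<eta>) ` Zs H"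
    proof -
      have rrx: "rr H \<xi> = \<rho> \<longleftrightarrow> \<xi> - ?\<eta> \<in> Zs H" for \<xi> using P[OF that] rr_eq_iff[of \<xi> ?\<eta>] by simp
      show ?thesis
      proof (intro equalityI subsetI)
        fix g assume "g \<in> {\<xi>. rr H \<xi> = \<rho>}"
        then have m: "g - ?\<eta> \<in> Zs H" using rrx by simp
        show "g \<in> (\<lambda>\<zeta>. \<zeta> + ?\<eta>) ` Zs H"
        proof (rule image_eqI[where x="g - ?\<eta>"])
          show "g = g - ?\<eta> + ?\<eta>" by simp
        qed (rule m)
      next
        fix g assume "g \<in> (\<lambda>\<zeta>. \<zeta> + ?\<eta>) ` Zs H"
        then obtain h where "h \<in> Zs H" "g = h + ?\<eta>" by (rule imageE)
        then show "g \<in> {\<xi>. rr H \<xi> = \<rho>}" using rrx by simp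
      qed
    qed
    have "card {g. g - ?g0 \<in> H} = ?K" unfolding e1 by (rule card_image) (auto simp: inj_on_def)
    moreover have "card {\<xi>. rr H \<xi> = \<rho>} = ?z" unfolding e2 by (rule card_image) (auto simp: inj_on_def)
    ultimately show ?thesis unfolding B_def by (simp add: card_cartesian_product)
  qed
  have cB: "real ?K^2 * \<delta>^2 \<le> ?c x" if rhoR: "\<rho> \<in> ?Rs" and xB: "x \<in> B \<rho>" for \<rho> x
  proof -
    obtain g \<xi> where x: "x = (g, \<xi>)" "g - snd (P \<rho>) \<in> H" "rr H \<xi> = \<rho>" using xB unfolding B_def by auto
    have "cmod (SS H (\<lambda>h. f (g + h)) \<xi>) = cmod (SS H (\<lambda>h. f (g + h)) (fst (P \<rho>)))"
      using P[OF rhoR] x(3) SS_rr[of \<xi> "fst (P \<rho>)"] by simp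
    also have "\<dots> = cmod (SS H (\<lambda>h. f (snd (P \<rho>) + h)) (fst (P \<rho>)))" by (rule SS_shift[OF x(2)])
    finally have "real ?K * \<delta> \<le> cmod (SS H (\<lambda>h. f (g + h)) \<xi>)" using P[OF rhoR] by simp
    then have "(real ?K * \<delta>)^2 \<le> (cmod (SS H (\<lambda>h. f (g + h)) \<xi>))^2"
      using \<delta>0 by (intro power_mono) auto
    then show ?thesis using x(1) by (simp add: power_mult_distrib)
  qed
  have disj: "\<forall>\<rho>\<in>?Rs. \<forall>\<rho>'\<in>?Rs. \<rho> \<noteq> \<rho>' \<longrightarrow> B \<rho> \<inter> B \<rho>' = {}"
    unfolding B_def by auto
  have "real (card ?Rs) * (real ?K * real ?z) * (real ?K^2 * \<delta>^2) = (\<Sum>\<rho>\<in>?Rs. \<Sum>x\<in>B \<rho>. real ?K^2 * \<delta>^2)"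
    using cardB by simp
  also have "\<dots> \<le> (\<Sum>\<rho>\<in>?Rs. \<Sum>x\<in>B \<rho>. ?c x)"
    using cB by (intro sum_mono) auto
  also have "\<dots> = (\<Sum>x\<in>(\<Union>\<rho>\<in>?Rs. B \<rho>). ?c x)"
    by (rule sum.UNION_disjoint[symmetric]) (use disj in auto)
  also have "\<dots> \<le> (\<Sum>x\<in>UNIV. ?c x)"
    by (intro sum_mono2) auto
  also have "\<dots> = (\<Sum>g\<in>UNIV. \<Sum>\<xi>\<in>UNIV. (cmod (SS H (\<lambda>h. f (g + h)) \<xi>))^2)"
    by (simp only: UNIV_Times_UNIV[symmetric] sum.cartesian_product)
  also have "\<dots> = (\<Sum>g\<in>UNIV. real ?N * (\<Sum>h\<in>H. (f (g + h))^2))"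
    by (rule sum.cong[OF refl], rule parseval)
  also have "\<dots> \<le> (\<Sum>g\<in>(UNIV :: ('n \<Rightarrow> 'p mod_ring) set). real ?N * real ?K)"
  proof (intro sum_mono mult_left_mono)
    fix g :: "'n \<Rightarrow> 'p mod_ring"
    have "(\<Sum>h\<in>H. (f (g + h))^2) \<le> (\<Sum>h\<in>H. 1)"
      using f1 by (intro sum_mono) (simp add: power_le_one)
    then show "(\<Sum>h\<in>H. (f (g + h))^2) \<le> real ?K" by simp
  qed simp
  also have "\<dots> = real ?N * real ?N * real ?K" by simp
  finally have A: "real (card ?Rs) * (real ?K * real ?z) * (real ?K^2 * \<delta>^2) \<le> real ?N * real ?N * real ?K" .
  have B: "real ?K * real ?z = real ?N" using N_eq[OF Hsub] by simp
  have C: "real (card ?Rs) * (real ?K * real ?z) * (real ?K^2 * \<delta>^2) = (real (card ?Rs) * real ?K * \<delta>^2) * (real ?N * real ?K)"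
    unfolding B[symmetric] power2_eq_square by (simp only: mult_ac)
  have "(real (card ?Rs) * real ?K * \<delta>^2) * (real ?N * real ?K) \<le> real ?N * (real ?N * real ?K)"
    using A unfolding C by (simp only: mult.assoc)
  moreover have "real ?N * real ?K > 0" using K0 by simp
  ultimately show ?thesis by (simp only: mult_le_cancel_right_pos)
qed

lemma kernel_subspace:
  "Fp.subspace {h\<in>H. \<forall>\<eta>\<in>L. dotp \<eta> h = 0}"
proof (rule Fp.subspaceI)
  show "0 \<in> {h\<in>H. \<forall>\<eta>\<in>L. dotp \<eta> h = 0}" using H0[OF Hsub] by simp
next
  fix x y assume "x \<in> {h\<in>H. \<forall>\<eta>\<in>L. dotp \<eta> h = 0}" "y \<in> {h\<in>H. \<forall>\<eta>\<in>L. dotp \<eta> h = 0}"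
  then show "x + y \<in> {h\<in>H. \<forall>\<eta>\<in>L. dotp \<eta> h = 0}" using Hadd[OF Hsub] by (simp add: dotp_add_right)
next
  fix c x assume "x \<in> {h\<in>H. \<forall>\<eta>\<in>L. dotp \<eta> h = 0}"
  moreover have "x \<in> H \<Longrightarrow> Fscale c x \<in> H" using Hsub unfolding Fp.subspace_def by blast
  ultimately show "Fscale c x \<in> {h\<in>H. \<forall>\<eta>\<in>L. dotp \<eta> h = 0}" by (simp add: dotp_scale_right)
qed

lemma card_kernel:
  "card H \<le> CARD('p) ^ card (rr H ` L) * card {h\<in>H. \<forall>\<eta>\<in>L. dotp \<eta> h = 0}"
proof -
  let ?H' = "{h\<in>H. \<forall>\<eta>\<in>L. dotp \<eta> h = 0}"
  let ?R = "rr H ` L"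
  define \<Phi> where "\<Phi> = (\<lambda>h. restrict (\<lambda>\<rho>. \<rho> h) ?R)"
  define \<sigma> where "\<sigma> = (\<lambda>v. SOME h. h \<in> H \<and> \<Phi> h = v)"
  have \<sigma>: "\<sigma> (\<Phi> h) \<in> H \<and> \<Phi> (\<sigma> (\<Phi> h)) = \<Phi> h" if "h \<in> H" for h
    unfolding \<sigma>_def by (rule someI[where x=h]) (simp add: that)
  define m where "m = (\<lambda>h. (\<Phi> h, h - \<sigma> (\<Phi> h)))"
  have mem: "m h \<in> \<Phi> ` H \<times> ?H'" if hH: "h \<in> H" for h
  proof -
    have sH: "\<sigma> (\<Phi> h) \<in> H" and sP: "\<Phi> (\<sigma> (\<Phi> h)) = \<Phi> h" using \<sigma>[OF hH] by auto
    have "dotp \<eta> (h - \<sigma> (\<Phi> h)) = 0" if "\<eta> \<in> L" for \<eta>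
    proof -
      have "rr H \<eta> \<in> ?R" using that by simp
      then have "rr H \<eta> (\<sigma> (\<Phi> h)) = rr H \<eta> h"
        using fun_cong[OF sP, of "rr H \<eta>"] unfolding \<Phi>_def by simp
      then have "dotp \<eta> (\<sigma> (\<Phi> h)) = dotp \<eta> h" using sH hH unfolding rr_def by simp
      then show ?thesis by (simp add: dotp_diff_right)
    qed
    then show ?thesis unfolding m_def using hH sH Hdiff[OF Hsub] by auto
  qed
  have inj: "inj_on m H"
  proof (rule inj_onI)
    fix x y assume "x \<in> H" "y \<in> H" "m x = m y"
    then have "\<Phi> x = \<Phi> y" "x - \<sigma> (\<Phi> x) = y - \<sigma> (\<Phi> y)" unfolding m_def by auto
    then show "x = y" by simp
  qed
  have "card H = card (m ` H)" using inj by (simp add: card_image)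
  also have "\<dots> \<le> card (\<Phi> ` H \<times> ?H')"
  proof (rule card_mono)
    show "m ` H \<subseteq> \<Phi> ` H \<times> ?H'" by (rule image_subsetI) (rule mem)
  qed simp
  also have "\<dots> = card (\<Phi> ` H) * card ?H'" by (simp add: card_cartesian_product)
  also have "card (\<Phi> ` H) \<le> card (PiE ?R (\<lambda>_. UNIV :: 'p mod_ring set))"
    by (intro card_mono) (auto simp: \<Phi>_def)
  also have "card (PiE ?R (\<lambda>_. UNIV :: 'p mod_ring set)) = CARD('p) ^ card ?R"
    by (simp add: card_PiE)
  finally show ?thesis by (simp add: mult_right_mono)
qed

lemma dim_kernel:
  "Fp.dim H \<le> card (rr H ` L) + Fp.dim {h\<in>H. \<forall>\<eta>\<in>L. dotp \<eta> h = 0}"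
proof -
  let ?H' = "{h\<in>H. \<forall>\<eta>\<in>L. dotp \<eta> h = 0}"
  have "CARD('p) ^ Fp.dim H \<le> CARD('p) ^ card (rr H ` L) * CARD('p) ^ Fp.dim ?H'"
    using card_kernel[of L] card_subspace[OF Hsub] card_subspace[OF kernel_subspace[of L]] by simp
  also have "\<dots> = CARD('p) ^ (card (rr H ` L) + Fp.dim ?H')" by (simp add: power_add)
  finally have "CARD('p) ^ Fp.dim H \<le> CARD('p) ^ (card (rr H ` L) + Fp.dim ?H')" .
  moreover have "CARD('p) > 1" using prime_card prime_gt_1_nat by blast
  ultimately show ?thesis using power_le_imp_le_exp by blast
qed

end



lemma pointwise_ineq:
  fixes a V \<gamma> \<mu> :: real
  assumes a0: "0 \<le> a" and a1: "a \<le> 1" and V0: "0 \<le> V" and V1: "V \<le> a * (1 - a)"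
    and g0: "0 < \<gamma>" and g1: "\<gamma> \<le> 1/60" and m0: "1/20 \<le> \<mu>" and m1: "\<mu> \<le> 36/713"
  shows "\<mu> * (1 - a) * V \<le> 2 * \<gamma> * a * V + (\<mu> - 1/36) * (a - (1 - \<gamma>))^2 * (a + 2 * (1 - \<gamma>))"
proof -
  define s where "s = 1 - a"
  have s0: "0 \<le> s" and s1: "s \<le> 1" using a0 a1 by (auto simp: s_def)
  have sq: "(a - (1 - \<gamma>))^2 = (s - \<gamma>)^2" unfolding s_def by (simp add: power2_eq_square algebra_simps)
  have m: "\<mu> - 1/36 \<ge> 1/45" using m0 by simp
  have c3: "a + 2 * (1 - \<gamma>) \<ge> a + 59/30" using g1 by simp
  have T0: "0 \<le> (\<mu> - 1/36) * (a - (1 - \<gamma>))^2 * (a + 2 * (1 - \<gamma>))"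
    using m a0 g1 by (intro mult_nonneg_nonneg) auto
  show ?thesis
  proof (cases "\<mu> * s \<le> 2 * \<gamma> * a")
    case True
    have "\<mu> * (1 - a) * V \<le> 2 * \<gamma> * a * V" using True V0 unfolding s_def by (intro mult_right_mono) auto
    then show ?thesis using T0 by linarith
  next
    case False
    have "\<mu> * s * V - 2 * \<gamma> * a * V = V * (\<mu> * s - 2 * \<gamma> * a)" by (simp add: algebra_simps)
    also have "\<dots> \<le> (a * s) * (\<mu> * s - 2 * \<gamma> * a)" using V1 False unfolding s_def by (intro mult_right_mono) auto
    also have "\<dots> \<le> \<mu> * a * s^2"
      using a0 s0 g0 by (simp add: power2_eq_square algebra_simps)
    finally have L: "\<mu> * s * V - 2 * \<gamma> * a * V \<le> \<mu> * a * s^2" .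
    have R: "\<mu> * a * s^2 \<le> (\<mu> - 1/36) * (s - \<gamma>)^2 * (a + 2 * (1 - \<gamma>))"
    proof (cases "a < 1/4")
      case True
      have "\<mu> * a * s^2 \<le> (36/713) * (1/4) * 1"
      proof -
        have "s^2 \<le> 1" using s0 s1 by (simp add: power_le_one)
        have "\<mu> * a \<le> (36/713) * (1/4)" using m1 True a0 m0 by (intro mult_mono) auto
        then show ?thesis using a0 m0 by (intro mult_mono[OF _ \<open>s^2 \<le> 1\<close>]) auto
      qed
      also have "\<dots> \<le> (1/45) * (11/15)^2 * (59/30)" by (simp add: power2_eq_square)
      also have "\<dots> \<le> (\<mu> - 1/36) * (s - \<gamma>)^2 * (a + 2 * (1 - \<gamma>))"
      proof -
        have "s - \<gamma> \<ge> 11/15" using True g1 unfolding s_def by simp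
        then have "(11/15)^2 \<le> (s - \<gamma>)^2" by (intro power_mono) auto
        then have "(1/45) * (11/15)^2 \<le> (\<mu> - 1/36) * (s - \<gamma>)^2" by (rule mult_mono[OF m]) (use m0 in auto)
        moreover have c4: "59/30 \<le> a + 2 * (1 - \<gamma>)" using a0 g1 by simp
        ultimately show ?thesis by (rule mult_mono) (use a0 m m0 in auto)
      qed
      finally show ?thesis .
    next
      case False
      then have a4: "a \<ge> 1/4" by simp
      have "\<gamma> * (1/2) \<le> 2 * \<gamma> * a" using a4 g0 by simp
      also have "\<dots> < \<mu> * s" using \<open>\<not> \<mu> * s \<le> 2 * \<gamma> * a\<close> by simp
      finally have "\<gamma> < 2 * \<mu> * s" by simp
      moreover have "\<mu> * s \<le> (36/713) * s" using m1 s0 by (rule mult_right_mono)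
      ultimately have "s - \<gamma> \<ge> s * (641/713)" by linarith
      then have sg: "(s * (641/713))^2 \<le> (s - \<gamma>)^2" using s0 by (intro power_mono) auto
      have "\<mu> * a * s^2 \<le> (36/713) * a * s^2" using m1 a0 by (intro mult_right_mono) auto
      also have "\<dots> \<le> (1/45) * (641/713)^2 * (a + 59/30) * s^2"
      proof (rule mult_right_mono)
        show "(36/713) * a \<le> (1/45) * (641/713)^2 * (a + 59/30)"
          using a1 a0 by (simp add: power2_eq_square)
      qed simp
      also have "\<dots> = (1/45) * (s * (641/713))^2 * (a + 59/30)" by (simp add: power2_eq_square)
      also have "\<dots> \<le> (\<mu> - 1/36) * (s - \<gamma>)^2 * (a + 2 * (1 - \<gamma>))"
      proof -
        have "(1/45) * (s * (641/713))^2 \<le> (\<mu> - 1/36) * (s - \<gamma>)^2" by (rule mult_mono[OF m sg]) (use m0 in auto)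
        then show ?thesis by (rule mult_mono[OF _ c3]) (use a0 m in auto)
      qed
      finally show ?thesis .
    qed
    have "\<mu> * (1 - a) * V = \<mu> * s * V" unfolding s_def by simp
    then show ?thesis unfolding sq using L R by linarith
  qed
qed




lemma var_bound_gen:
  fixes x :: "'a \<Rightarrow> real"
  assumes fin: "finite I" and x01: "\<And>i. i \<in> I \<Longrightarrow> 0 \<le> x i \<and> x i \<le> 1"
    and sa: "(\<Sum>i\<in>I. x i) = real (card I) * a"
  shows "(\<Sum>i\<in>I. (x i - a)^2) \<le> real (card I) * a * (1 - a)"
proof -
  have "(\<Sum>i\<in>I. (x i - a)^2) = (\<Sum>i\<in>I. (x i)^2 - (2 * a) * x i + a^2)"
    by (intro sum.cong refl) (simp add: power2_eq_square algebra_simps)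
  also have "\<dots> = (\<Sum>i\<in>I. (x i)^2) - 2 * a * (\<Sum>i\<in>I. x i) + real (card I) * a^2"
    by (simp only: sum.distrib sum_subtractf sum_distrib_left[symmetric] sum_constant)
  also have "(\<Sum>i\<in>I. (x i)^2) \<le> (\<Sum>i\<in>I. x i)"
  proof (rule sum_mono)
    fix i assume "i \<in> I" then show "(x i)^2 \<le> x i" using x01[of i] by (simp add: power2_eq_square mult_left_le)
  qed
  finally show ?thesis unfolding sa by (simp add: power2_eq_square algebra_simps)
qed

lemma incr_gen:
  fixes x :: "'a \<Rightarrow> real"
  assumes fin: "finite I" and x0: "\<And>i. i \<in> I \<Longrightarrow> 0 \<le> x i"
    and sa: "(\<Sum>i\<in>I. x i) = real (card I) * a"
  shows "2 * a * (\<Sum>i\<in>I. (x i - a)^2) \<le> (\<Sum>i\<in>I. (x i)^3) - real (card I) * a^3"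
proof -
  have pt: "2 * a * (x i - a)^2 \<le> (x i)^3 - a^3 - 3 * a^2 * (x i - a)" if "i \<in> I" for i
  proof -
    have "(x i)^3 - a^3 - 3 * a^2 * (x i - a) = (x i - a)^2 * (x i + 2 * a)"
      by (simp add: power2_eq_square power3_eq_cube algebra_simps)
    moreover have "(x i - a)^2 * (2 * a) \<le> (x i - a)^2 * (x i + 2 * a)"
      using x0[OF that] by (intro mult_left_mono) auto
    ultimately show ?thesis by (simp add: mult_ac)
  qed
  have "2 * a * (\<Sum>i\<in>I. (x i - a)^2) = (\<Sum>i\<in>I. 2 * a * (x i - a)^2)" by (simp add: sum_distrib_left)
  also have "\<dots> \<le> (\<Sum>i\<in>I. (x i)^3 - a^3 - 3 * a^2 * (x i - a))" using pt by (rule sum_mono)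
  also have "\<dots> = (\<Sum>i\<in>I. (x i)^3) - real (card I) * a^3 - 3 * a^2 * ((\<Sum>i\<in>I. x i) - real (card I) * a)"
    by (simp only: sum_subtractf sum_constant sum_distrib_left[symmetric])
  also have "\<dots> = (\<Sum>i\<in>I. (x i)^3) - real (card I) * a^3" unfolding sa by simp
  finally show ?thesis .
qed

lemma sum_UNIV_translate:
  "(\<Sum>g\<in>UNIV. F (g + h)) = (\<Sum>x\<in>(UNIV :: ('n::finite \<Rightarrow> 'p::prime_card mod_ring) set). (F x :: real))"
  by (rule sum_translate) auto

lemma coset_density_eq:
  assumes "Fp.subspace V"
  shows "coset_density f V g = (\<Sum>h\<in>V. f (g + h)) / real (card V)"
proof -
  have inj: "inj_on (\<lambda>h. h + g) V" by (auto simp: inj_on_def)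
  show ?thesis unfolding coset_density_def using inj
    by (simp add: sum.reindex card_image add.commute)
qed

lemma coset_density_01:
  assumes "Fp.subspace V" and f01: "\<And>x. 0 \<le> f x \<and> f x \<le> 1"
  shows "0 \<le> coset_density f V g \<and> coset_density f V g \<le> 1"
proof -
  have K0: "card V > 0" using assms(1) unfolding Fp.subspace_def by (auto simp: card_gt_0_iff)
  have "0 \<le> (\<Sum>h\<in>V. f (g + h))" using f01 by (intro sum_nonneg) auto
  moreover have "(\<Sum>h\<in>V. f (g + h)) \<le> (\<Sum>h\<in>V. 1)" using f01 by (intro sum_mono) auto
  ultimately show ?thesis unfolding coset_density_eq[OF assms(1)] using K0 by simp
qed

lemma two_prod: "0 \<le> a \<Longrightarrow> a \<le> 1 \<Longrightarrow> 0 \<le> b \<Longrightarrow> b \<le> 1 \<Longrightarrow> a + b - 1 \<le> a * (b::real)"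
proof -
  assume "a \<le> 1" "b \<le> 1"
  then have "0 \<le> (1 - a) * (1 - b)" by (intro mult_nonneg_nonneg) auto
  then show ?thesis by (simp add: algebra_simps)
qed

lemma three_prod:
  fixes a b c :: real
  assumes "0 \<le> a" "a \<le> 1" "0 \<le> b" "b \<le> 1" "0 \<le> c" "c \<le> 1"
  shows "a + b + c - 2 \<le> a * b * c"
proof -
  have "a + b - 1 \<le> a * b" using assms by (intro two_prod) auto
  moreover have "a * b + c - 1 \<le> (a * b) * c" using assms by (intro two_prod) (auto simp: mult_le_one)
  ultimately show ?thesis by linarith
qed

context
  fixes H :: "('n::finite \<Rightarrow> 'p::prime_card mod_ring) set"
  assumes Hsub: "Fp.subspace H"
begin

lemma sum_cosets: "(\<Sum>g\<in>UNIV. \<Sum>h\<in>H. F (g + h)) = real (card H) * (\<Sum>x\<in>UNIV. (F x :: real))"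
proof -
  have "(\<Sum>g\<in>UNIV. \<Sum>h\<in>H. F (g + h)) = (\<Sum>h\<in>H. \<Sum>g\<in>UNIV. F (g + h))" by (rule sum.swap)
  also have "\<dots> = (\<Sum>h\<in>H. \<Sum>x\<in>UNIV. F x)" by (simp only: sum_UNIV_translate)
  finally show ?thesis by simp
qed

lemma avg_sub:
  assumes H'sub: "H' \<subseteq> H" and H'sp: "Fp.subspace H'"
  shows "(\<Sum>h\<in>H. coset_density f H' (g + h)) = (\<Sum>h\<in>H. f (g + h))"
proof -
  have K0: "card H' > 0" using H'sp unfolding Fp.subspace_def by (auto simp: card_gt_0_iff)
  have "(\<Sum>h\<in>H. coset_density f H' (g + h)) = (\<Sum>h'\<in>H'. \<Sum>h\<in>H. f (g + (h + h'))) / real (card H')"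
    unfolding coset_density_eq[OF H'sp] by (simp add: sum_divide_distrib sum.swap[of _ H'] add.assoc)
  also have "\<dots> = (\<Sum>h'\<in>H'. \<Sum>h\<in>H. f (g + h)) / real (card H')"
    using H'sub by (intro arg_cong[where f="\<lambda>x. x / _"] sum.cong refl sum_translate[OF Hadd[OF Hsub]]) auto
  also have "\<dots> = (\<Sum>h\<in>H. f (g + h))" using K0 by (auto simp: card_gt_0_iff)
  finally show ?thesis .
qed

lemma T_bound:
  fixes f :: "('n \<Rightarrow> 'p mod_ring) \<Rightarrow> real"
  assumes f01: "\<And>x. 0 \<le> f x \<and> f x \<le> 1" and K2: "card H \<ge> 2"
  shows "(\<Sum>g\<in>UNIV. \<Sum>h\<in>H. \<Sum>d\<in>H. f (g + h) * f (g + h + d) * f (g + h + d + d)) / real (card H)^2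
     \<le> real CARD('n \<Rightarrow> 'p mod_ring) * ap3_density f H + 2 * real CARD('n \<Rightarrow> 'p mod_ring) * (1 - mean f) / real (card H)"
proof -
  let ?N = "real CARD('n \<Rightarrow> 'p mod_ring)"
  let ?K = "real (card H)"
  let ?P = "\<lambda>x d. f x * f (x + d) * f (x + 2 * d)"
  define D where "D = (\<Sum>x\<in>UNIV. \<Sum>d\<in>H - {0}. ?P x d)"
  define F3 where "F3 = (\<Sum>x\<in>UNIV. f x * f x * f x)"
  define SF where "SF = (\<Sum>x\<in>(UNIV :: ('n \<Rightarrow> 'p mod_ring) set). f x)"
  have N0: "?N > 0" by simp
  have cH0: "card (H - {0}) = card H - 1" using H0[OF Hsub] by simp
  have K1: "real (card (H - {0})) = ?K - 1" using cH0 K2 by simp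
  have K1pos: "?K - 1 > 0" using K2 by simp
  have lam: "ap3_density f H = D / (?K - 1) / ?N"
    unfolding ap3_density_def D_def K1 by (simp add: sum_divide_distrib)
  have mean: "mean f = SF / ?N" unfolding mean_def SF_def by simp
  have P2: "?P x d = f x * f (x + d) * f (x + d + d)" for x d
    by (simp only: mult_2 add.assoc)
  have "(\<Sum>g\<in>UNIV. \<Sum>h\<in>H. \<Sum>d\<in>H. f (g + h) * f (g + h + d) * f (g + h + d + d)) = (\<Sum>g\<in>UNIV. \<Sum>h\<in>H. (\<Sum>d\<in>H. ?P (g + h) d))"
    by (simp only: P2)
  also have "\<dots> = ?K * (\<Sum>x\<in>UNIV. \<Sum>d\<in>H. ?P x d)" by (rule sum_cosets)
  also have "(\<Sum>x\<in>UNIV. \<Sum>d\<in>H. ?P x d) = D + F3"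
  proof -
    have "(\<Sum>d\<in>H. ?P x d) = (\<Sum>d\<in>H - {0}. ?P x d) + f x * f x * f x" for x
      using H0[OF Hsub] by (simp add: sum.remove add.commute)
    then show ?thesis unfolding D_def F3_def by (simp add: sum.distrib)
  qed
  finally have TT: "(\<Sum>g\<in>UNIV. \<Sum>h\<in>H. \<Sum>d\<in>H. f (g + h) * f (g + h + d) * f (g + h + d + d)) = ?K * (D + F3)" .
  have F3SF: "F3 \<le> SF" unfolding F3_def SF_def
  proof (rule sum_mono)
    fix x
    have "f x * f x \<le> 1" using f01[of x] by (simp add: mult_le_one)
    then have "(f x * f x) * f x \<le> 1 * f x" using f01[of x] by (intro mult_right_mono) auto
    then show "f x * f x * f x \<le> f x" by simp
  qed
  have Dlow: "(?K - 1) * (3 * SF - 2 * ?N) \<le> D"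
  proof -
    have "(\<Sum>x\<in>UNIV. \<Sum>d\<in>H - {0}. f x + f (x + d) + f (x + 2 * d) - 2) \<le> D"
      unfolding D_def using f01 by (intro sum_mono three_prod) auto
    moreover have "(\<Sum>x\<in>UNIV. \<Sum>d\<in>H - {0}. f x + f (x + d) + f (x + 2 * d) - 2) = (\<Sum>d\<in>H - {0}. 3 * SF - 2 * ?N)"
    proof -
      have "(\<Sum>x\<in>UNIV. \<Sum>d\<in>H - {0}. f x + f (x + d) + f (x + 2 * d) - 2) = (\<Sum>d\<in>H - {0}. \<Sum>x\<in>UNIV. f x + f (x + d) + f (x + 2 * d) - 2)"
        by (rule sum.swap)
      also have "\<dots> = (\<Sum>d\<in>H - {0}. 3 * SF - 2 * ?N)"
      proof (rule sum.cong[OF refl])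
        fix d
        have "(\<Sum>x\<in>UNIV. f x + f (x + d) + f (x + 2 * d) - 2) = SF + (\<Sum>x\<in>UNIV. f (x + d)) + (\<Sum>x\<in>UNIV. f (x + 2 * d)) - 2 * ?N"
          unfolding SF_def by (simp add: sum.distrib sum_subtractf)
        also have "\<dots> = 3 * SF - 2 * ?N" unfolding SF_def sum_UNIV_translate by simp
        finally show "(\<Sum>x\<in>UNIV. f x + f (x + d) + f (x + 2 * d) - 2) = 3 * SF - 2 * ?N" .
      qed
      finally show ?thesis .
    qed
    ultimately show ?thesis using K1 by simp
  qed
  have "(?K * (D + F3)) / ?K^2 = (D + F3) / ?K" using K2 by (simp add: power2_eq_square)
  also have "\<dots> \<le> (D + SF) / ?K" using F3SF K2 by (intro divide_right_mono) auto
  also have "\<dots> \<le> D / (?K - 1) + 2 * (?N - SF) / ?K"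
  proof -
    have "(?K - 1) * (SF - 2 * (?N - SF)) \<le> D" using Dlow by (simp add: algebra_simps)
    then have "SF - 2 * (?N - SF) \<le> D / (?K - 1)" using K1pos by (simp add: field_simps)
    define X where "X = D / (?K - 1)"
    have "(?K - 1) * X = D" unfolding X_def using K1pos by simp
    then have DX: "D = ?K * X - X" by (simp add: algebra_simps)
    have q: "SF - 2 * (?N - SF) \<le> X" using \<open>SF - 2 * (?N - SF) \<le> D / (?K - 1)\<close> unfolding X_def .
    have "D + SF \<le> ?K * X + 2 * (?N - SF)" using q DX by linarith
    then have "(D + SF) / ?K \<le> (?K * X + 2 * (?N - SF)) / ?K" using K2 by (intro divide_right_mono) auto
    also have "\<dots> = X + 2 * (?N - SF) / ?K"
    proof -
      have Kp: "?K \<noteq> 0" using K2 by (cases "H = {}") auto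
      have "(?K * X + 2 * (?N - SF)) / ?K = ?K * X / ?K + 2 * (?N - SF) / ?K" by (rule add_divide_distrib)
      also have "?K * X / ?K = X" using Kp by simp
      finally show ?thesis .
    qed
    finally show ?thesis unfolding X_def .
  qed
  also have "\<dots> = ?N * ap3_density f H + 2 * ?N * (1 - mean f) / ?K"
  proof -
    have e1: "?N * (D / (?K - 1) / ?N) = D / (?K - 1)" using N0 by simp
    have e2: "?N * (1 - SF / ?N) = ?N - SF" using N0 by (simp add: right_diff_distrib)
    show ?thesis unfolding lam mean by (simp only: e1 mult.assoc e2)
  qed
  finally show ?thesis unfolding TT .
qed

end



theorem lemma16:
  fixes f :: "('n::finite \<Rightarrow> 'p::prime_card mod_ring) \<Rightarrow> real"
    and H :: "('n \<Rightarrow> 'p mod_ring) set"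
    and \<alpha> \<gamma> \<epsilon> :: real
  assumes p_odd: "odd CARD('p)"
    and f_range: "\<And>x. 0 \<le> f x \<and> f x \<le> 1"
    and alpha_def: "\<alpha> = mean f"
    and alpha_ge: "\<alpha> \<ge> 59/60"
    and gamma_def: "\<gamma> = 1 - \<alpha>"
    and gamma_pos: "\<gamma> > 0"
    and eps_pos: "\<epsilon> > 0"
    and H_sub: "Fp.subspace H"
    and H_card: "real (card H) > max (1 / \<gamma> ^ 3) (4 / \<epsilon>)"
    and lam: "ap3_density f H < \<alpha> ^ 3 - \<epsilon>"
  shows "\<exists>H'. Fp.subspace H' \<and> H' \<subseteq> H \<and>
     real (codim H') \<le> real (codim H) + real CARD('p) ^ codim H * 144 / \<epsilon> ^ 2 \<and>
     mean_cube f H' - \<alpha> ^ 3 \<ge> (1 + 1 / (36 * \<gamma>)) * (mean_cube f H - \<alpha> ^ 3) + \<epsilon> / (20 * \<gamma>)"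
proof -
  let ?N = "real CARD('n \<Rightarrow> 'p mod_ring)"
  let ?K = "real (card H)"
  have N0: "?N > 0" by simp
  have two: "(2::'p mod_ring) \<noteq> 0"
  proof
    assume "(2::'p mod_ring) = 0"
    then have "(of_nat 2 :: 'p mod_ring) = 0" by simp
    then have "CARD('p) dvd 2" by (rule of_nat_0_mod_ring_dvd)
    then have "CARD('p) \<le> 2" by (rule dvd_imp_le) simp
    moreover have "CARD('p) > 1" using prime_card prime_gt_1_nat by blast
    ultimately have "CARD('p) = 2" by simp
    then show False using p_odd by simp
  qed
  have g1: "\<gamma> \<le> 1/60" using alpha_ge gamma_def by simp
  have K2: "card H \<ge> 2"
  proof -
    have "\<gamma>^3 \<le> 1" using gamma_pos g1 by (intro power_le_one) auto
    then have "1 \<le> 1 / \<gamma>^3" using gamma_pos by simp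
    then have "?K > 1" using H_card by simp
    then show ?thesis by simp
  qed
  have Kpos: "?K > 0" using K2 by simp
  have Hne: "H \<noteq> {}" using H_sub unfolding Fp.subspace_def by auto
  have invK: "1 / ?K < \<epsilon> / 4"
  proof -
    have "4 / \<epsilon> < ?K" using H_card by simp
    then have "4 < ?K * \<epsilon>" using eps_pos by (simp add: field_simps)
    then show ?thesis using Kpos by (simp add: field_simps)
  qed
  define \<delta> where "\<delta> = \<epsilon> / 12"
  have \<delta>0: "\<delta> > 0" using eps_pos by (simp add: \<delta>_def)
  define L where "L = {\<eta>. \<eta> \<notin> Zs H \<and> (\<exists>g. ?K * \<delta> \<le> cmod (SS H (\<lambda>h. f (g + h)) \<eta>))}"
  define H' where "H' = {h\<in>H. \<forall>\<eta>\<in>L. dotp \<eta> h = 0}"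
  have H'sp: "Fp.subspace H'" unfolding H'_def by (rule kernel_subspace[OF H_sub])
  have H'sub: "H' \<subseteq> H" unfolding H'_def by auto
  have H'0: "0 \<in> H'" using H'sp unfolding Fp.subspace_def by simp
  have codim_ok: "real (codim H') \<le> real (codim H) + real CARD('p) ^ codim H * 144 / \<epsilon> ^ 2"
  proof -
    let ?R = "rr H ` L"
    have cnt: "real (card ?R) * ?K * \<delta>^2 \<le> ?N"
      by (rule count_large[OF H_sub \<delta>0 f_range]) (auto simp: L_def)
    have dk: "Fp.dim H \<le> card ?R + Fp.dim H'" unfolding H'_def by (rule dim_kernel[OF H_sub])
    have dH: "Fp.dim H \<le> CARD('n)" by (rule dim_le_n[OF H_sub])
    have dH': "Fp.dim H' \<le> CARD('n)" by (rule dim_le_n[OF H'sp])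
    have c1: "codim H' \<le> codim H + card ?R" unfolding codim_def using dk dH dH' by linarith
    have NK: "?N = ?K * real CARD('p) ^ codim H"
    proof -
      have "CARD('n \<Rightarrow> 'p mod_ring) = CARD('p) ^ CARD('n)" by (simp add: card_fun)
      also have "CARD('n) = Fp.dim H + codim H" unfolding codim_def using dH by simp
      also have "CARD('p) ^ (Fp.dim H + codim H) = card H * CARD('p) ^ codim H"
        by (simp add: power_add card_subspace[OF H_sub])
      finally show ?thesis by simp
    qed
    have "real (card ?R) * (?K * \<delta>^2) \<le> (real CARD('p) ^ codim H * 144 / \<epsilon> ^ 2) * (?K * \<delta>^2)"
    proof -
      have "(real CARD('p) ^ codim H * 144 / \<epsilon> ^ 2) * (?K * \<delta>^2) = ?K * real CARD('p) ^ codim H"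
        unfolding \<delta>_def using eps_pos by (simp add: power2_eq_square field_simps)
      then show ?thesis using cnt NK by (simp add: mult.assoc)
    qed
    then have "real (card ?R) \<le> real CARD('p) ^ codim H * 144 / \<epsilon> ^ 2"
      by (rule mult_right_le_imp_le) (use Kpos \<delta>0 in simp)
    then show ?thesis using c1 by linarith
  qed
  define a where "a = (\<lambda>g. coset_density f H g)"
  define a' where "a' = (\<lambda>x. coset_density f H' x)"
  have aeq: "a g = (\<Sum>h\<in>H. f (g + h)) / ?K" for g unfolding a_def by (rule coset_density_eq[OF H_sub])
  have a'eq: "a' x = (\<Sum>h'\<in>H'. f (x + h')) / real (card H')" for x unfolding a'_def by (rule coset_density_eq[OF H'sp])
  have a01: "0 \<le> a g \<and> a g \<le> 1" for g unfolding a_def by (rule coset_density_01[OF H_sub f_range])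
  have a'01: "0 \<le> a' g \<and> a' g \<le> 1" for g unfolding a'_def by (rule coset_density_01[OF H'sp f_range])
  define V where "V = (\<lambda>g. (\<Sum>h\<in>H. (a' (g + h) - a g)^2) / ?K)"
  define T where "T = (\<lambda>g. \<Sum>h\<in>H. \<Sum>d\<in>H. f (g + h) * f (g + h + d) * f (g + h + d + d))"
  have def_g: "a g ^ 3 - T g / ?K^2 \<le> \<delta> * (1 - a g) + (1 - a g) * V g" for g
  proof -
    have large: "\<forall>h\<in>H'. dotp \<eta> h = 0" if "\<eta> \<notin> Zs H" "?K * \<delta> \<le> cmod (SS H (\<lambda>h. f (g + h)) \<eta>)" for \<eta>
    proof -
      have "\<eta> \<in> L" unfolding L_def using that by blast
      then show ?thesis unfolding H'_def by blast
    qed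
    have D: "?K^2 * a g ^ 3 - (\<Sum>h\<in>H. \<Sum>d\<in>H. f (g + h) * f (g + (h + d)) * f (g + (h + d + d)))
          \<le> ?K^2 * (\<delta> * (1 - a g)) + ?K * (1 - a g) * (\<Sum>h\<in>H. ((\<Sum>h'\<in>H'. f (g + (h + h'))) / real (card H') - a g)^2)"
      unfolding aeq by (rule deficit[OF H_sub, of "\<lambda>h. f (g + h)" H' \<delta>]) (use f_range H'sub H'0 \<delta>0 large two in auto)
    have Tk: "T g = (\<Sum>h\<in>H. \<Sum>d\<in>H. f (g + h) * f (g + (h + d)) * f (g + (h + d + d)))"
      unfolding T_def by (simp only: add.assoc)
    have ak: "(\<Sum>h'\<in>H'. f (g + (h + h'))) / real (card H') = a' (g + h)" for h
      by (simp only: a'eq add.assoc)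
    have Vk: "?K * V g = (\<Sum>h\<in>H. (a' (g + h) - a g)^2)" unfolding V_def using Kpos by simp
    have "?K^2 \<noteq> 0" using Hne by simp
    then have "?K^2 * (a g ^ 3 - T g / ?K^2) = ?K^2 * a g ^ 3 - T g" by (simp add: right_diff_distrib)
    also have "\<dots> \<le> ?K^2 * (\<delta> * (1 - a g)) + ?K * (1 - a g) * (?K * V g)"
      using D unfolding Tk ak Vk .
    also have "\<dots> = ?K^2 * (\<delta> * (1 - a g) + (1 - a g) * V g)" by (simp add: power2_eq_square algebra_simps)
    finally show ?thesis using Kpos by (simp only: mult_le_cancel_left_pos zero_less_power)
  qed
  have sa: "(\<Sum>h\<in>H. a' (g + h)) = ?K * a g" for g
  proof -
    have "(\<Sum>h\<in>H. a' (g + h)) = (\<Sum>h\<in>H. f (g + h))" unfolding a'_def by (rule avg_sub[OF H_sub H'sub H'sp])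
    then show ?thesis unfolding aeq using Kpos by simp
  qed
  have Vk: "?K * V g = (\<Sum>h\<in>H. (a' (g + h) - a g)^2)" for g unfolding V_def using Kpos by simp
  have V0: "0 \<le> V g" for g unfolding V_def by (intro divide_nonneg_nonneg sum_nonneg) auto
  have var_g: "V g \<le> a g * (1 - a g)" for g
  proof -
    have "(\<Sum>h\<in>H. (a' (g + h) - a g)^2) \<le> ?K * a g * (1 - a g)"
      by (rule var_bound_gen[OF finite]) (use a'01 sa in auto)
    then have "?K * V g \<le> ?K * (a g * (1 - a g))" unfolding Vk by (simp add: mult.assoc)
    then show ?thesis using Kpos by simp
  qed
  have inc_g: "2 * a g * (?K * V g) \<le> (\<Sum>h\<in>H. (a' (g + h))^3) - ?K * a g ^ 3" for g
    unfolding Vk by (rule incr_gen[OF finite]) (use a'01 sa in auto)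
  define SF where "SF = (\<Sum>x\<in>(UNIV :: ('n \<Rightarrow> 'p mod_ring) set). f x)"
  have alpha_SF: "\<alpha> = SF / ?N" unfolding alpha_def mean_def SF_def by simp
  have Sa: "(\<Sum>g\<in>UNIV. a g) = ?N * \<alpha>"
  proof -
    have "(\<Sum>g\<in>UNIV. a g) = (\<Sum>g\<in>UNIV. \<Sum>h\<in>H. f (g + h)) / ?K" unfolding aeq by (simp add: sum_divide_distrib)
    also have "\<dots> = SF" unfolding sum_cosets[OF H_sub] SF_def using Hne by simp
    finally show ?thesis unfolding alpha_SF by simp
  qed
  have S1a: "(\<Sum>g\<in>UNIV. 1 - a g) = ?N * \<gamma>" unfolding gamma_def by (simp add: sum_subtractf Sa algebra_simps)
  define SA3 where "SA3 = (\<Sum>g\<in>UNIV. a g ^ 3)"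
  define SB3 where "SB3 = (\<Sum>g\<in>UNIV. a' g ^ 3)"
  define E1 where "E1 = (\<Sum>g\<in>UNIV. (1 - a g) * V g)"
  define I where "I = (\<Sum>g\<in>UNIV. 2 * a g * V g)"
  define Bs where "Bs = (\<Sum>g\<in>UNIV. (a g - \<alpha>)^2 * (a g + 2 * \<alpha>))"
  define ST where "ST = (\<Sum>g\<in>UNIV. T g)"
  have mcH: "mean_cube f H = SA3 / ?N" unfolding mean_cube_def SA3_def a_def by simp
  have mcH': "mean_cube f H' = SB3 / ?N" unfolding mean_cube_def SB3_def a'_def by simp
  have f1: "SA3 - ST / ?K^2 \<le> \<delta> * (?N * \<gamma>) + E1"
  proof -
    have "SA3 - ST / ?K^2 = (\<Sum>g\<in>UNIV. a g ^ 3 - T g / ?K^2)"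
      unfolding SA3_def ST_def by (simp add: sum_subtractf sum_divide_distrib)
    also have "\<dots> \<le> (\<Sum>g\<in>UNIV. \<delta> * (1 - a g) + (1 - a g) * V g)" by (rule sum_mono) (rule def_g)
    also have "\<dots> = \<delta> * (\<Sum>g\<in>UNIV. 1 - a g) + E1" unfolding E1_def by (simp add: sum.distrib sum_distrib_left)
    finally show ?thesis unfolding S1a .
  qed
  have f2: "ST / ?K^2 \<le> ?N * ap3_density f H + 2 * ?N * \<gamma> / ?K"
    using T_bound[OF H_sub f_range K2] unfolding ST_def T_def gamma_def alpha_def .
  have f4: "SA3 - ?N * \<alpha>^3 = Bs"
  proof -
    have "(\<Sum>g\<in>UNIV. a g ^ 3 - \<alpha>^3) = (\<Sum>g\<in>UNIV. (a g - \<alpha>)^2 * (a g + 2 * \<alpha>) + 3 * \<alpha>^2 * (a g - \<alpha>))"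
      by (intro sum.cong refl) (simp add: power2_eq_square power3_eq_cube algebra_simps)
    also have "\<dots> = Bs + 3 * \<alpha>^2 * ((\<Sum>g\<in>UNIV. a g) - ?N * \<alpha>)"
      unfolding Bs_def by (simp add: sum.distrib sum_distrib_left[symmetric] sum_subtractf)
    also have "\<dots> = Bs" unfolding Sa by simp
    finally show ?thesis unfolding SA3_def by (simp add: sum_subtractf)
  qed
  define \<kappa> where "\<kappa> = 1 - 7 * \<gamma> / 12"
  define \<mu> where "\<mu> = 1 / (20 * \<kappa>)"
  have k1: "713/720 \<le> \<kappa>" "\<kappa> \<le> 1" unfolding \<kappa>_def using g1 gamma_pos by auto
  have m0: "1/20 \<le> \<mu>" unfolding \<mu>_def using k1 by (simp add: field_simps)
  have m1: "\<mu> \<le> 36/713" unfolding \<mu>_def using k1 by (simp add: field_simps)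
  have f5: "\<mu> * E1 \<le> \<gamma> * I + (\<mu> - 1/36) * Bs"
  proof -
    have "\<mu> * E1 = (\<Sum>g\<in>UNIV. \<mu> * (1 - a g) * V g)" unfolding E1_def by (simp add: sum_distrib_left mult.assoc)
    also have "\<dots> \<le> (\<Sum>g\<in>UNIV. 2 * \<gamma> * a g * V g + (\<mu> - 1/36) * (a g - (1 - \<gamma>))^2 * (a g + 2 * (1 - \<gamma>)))"
    proof (rule sum_mono)
      fix g show "\<mu> * (1 - a g) * V g \<le> 2 * \<gamma> * a g * V g + (\<mu> - 1/36) * (a g - (1 - \<gamma>))^2 * (a g + 2 * (1 - \<gamma>))"
        by (rule pointwise_ineq) (use a01[of g] V0[of g] var_g[of g] gamma_pos g1 m0 m1 in auto)
    qed
    also have "\<dots> = \<gamma> * I + (\<mu> - 1/36) * Bs"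
      unfolding I_def Bs_def gamma_def by (simp add: sum.distrib sum_distrib_left mult_ac)
    finally show ?thesis .
  qed
  have f6: "I \<le> SB3 - SA3"
  proof -
    have "?K * I = (\<Sum>g\<in>UNIV. 2 * a g * (?K * V g))" unfolding I_def by (simp add: sum_distrib_left mult_ac)
    also have "\<dots> \<le> (\<Sum>g\<in>UNIV. (\<Sum>h\<in>H. (a' (g + h))^3) - ?K * a g ^ 3)" by (rule sum_mono) (rule inc_g)
    also have "\<dots> = ?K * SB3 - ?K * SA3"
      unfolding SB3_def SA3_def sum_subtractf sum_cosets[OF H_sub, of "\<lambda>x. (a' x)^3"] by (simp add: sum_distrib_left)
    finally have "?K * I \<le> ?K * (SB3 - SA3)" by (simp add: right_diff_distrib)
    then show ?thesis using Kpos by simp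
  qed
  have NG: "?N * \<gamma> > 0" using gamma_pos by simp
  have s1: "Bs + ?N * \<epsilon> < \<delta> * (?N * \<gamma>) + E1 + 2 * ?N * \<gamma> / ?K"
  proof -
    have "?N * ap3_density f H < ?N * (\<alpha>^3 - \<epsilon>)" using lam N0 by simp
    then show ?thesis using f1 f2 f4 by (simp add: algebra_simps)
  qed
  have s2: "2 * ?N * \<gamma> / ?K \<le> (?N * \<gamma>) * (\<epsilon> / 2)"
  proof -
    have "2 * ?N * \<gamma> / ?K = (?N * \<gamma>) * (2 * (1 / ?K))" by simp
    also have "\<dots> \<le> (?N * \<gamma>) * (\<epsilon> / 2)" using NG invK by (intro mult_left_mono) auto
    finally show ?thesis .
  qed
  have s3: "?N * \<epsilon> * \<kappa> < E1 - Bs"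
  proof -
    have "?N * \<epsilon> * \<kappa> = ?N * \<epsilon> - (?N * \<gamma>) * (\<epsilon> / 12) - (?N * \<gamma>) * (\<epsilon> / 2)"
      unfolding \<kappa>_def by (simp add: algebra_simps)
    moreover have "\<delta> * (?N * \<gamma>) = (?N * \<gamma>) * (\<epsilon> / 12)" unfolding \<delta>_def by simp
    ultimately show ?thesis using s1 s2 by linarith
  qed
  have mk: "\<mu> * \<kappa> = 1/20" unfolding \<mu>_def using k1 by simp
  have s4: "?N * \<epsilon> / 20 < \<mu> * (E1 - Bs)"
  proof -
    have "\<mu> * (?N * \<epsilon> * \<kappa>) < \<mu> * (E1 - Bs)" using s3 m0 by (intro mult_strict_left_mono) auto
    moreover have "\<mu> * (?N * \<epsilon> * \<kappa>) = ?N * \<epsilon> / 20" using mk by (simp add: mult_ac)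
    ultimately show ?thesis by simp
  qed
  have s5: "?N * \<epsilon> / 20 + Bs / 36 < \<gamma> * (SB3 - SA3)"
  proof -
    have "\<gamma> * I \<le> \<gamma> * (SB3 - SA3)" using f6 gamma_pos by (intro mult_left_mono) auto
    moreover have "\<mu> * (E1 - Bs) + Bs / 36 \<le> \<gamma> * I" using f5 by (simp add: algebra_simps)
    ultimately show ?thesis using s4 by linarith
  qed
  have s6: "\<epsilon> / (20 * \<gamma>) + Bs / ?N / (36 * \<gamma>) \<le> (SB3 - SA3) / ?N"
  proof -
    have "(?N * \<epsilon> / 20 + Bs / 36) / (\<gamma> * ?N) \<le> \<gamma> * (SB3 - SA3) / (\<gamma> * ?N)"
      using s5 NG by (intro divide_right_mono) (auto simp: mult.commute)
    moreover have "(?N * \<epsilon> / 20 + Bs / 36) / (\<gamma> * ?N) = \<epsilon> / (20 * \<gamma>) + Bs / ?N / (36 * \<gamma>)"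
      using gamma_pos N0 by (simp add: field_simps)
    moreover have "\<gamma> * (SB3 - SA3) / (\<gamma> * ?N) = (SB3 - SA3) / ?N" using gamma_pos by simp
    ultimately show ?thesis by simp
  qed
  have main: "mean_cube f H' - \<alpha> ^ 3 \<ge> (1 + 1 / (36 * \<gamma>)) * (mean_cube f H - \<alpha> ^ 3) + \<epsilon> / (20 * \<gamma>)"
  proof -
    have e1: "mean_cube f H - \<alpha> ^ 3 = Bs / ?N" unfolding mcH using f4 N0 by (simp add: field_simps)
    have e2: "mean_cube f H' - \<alpha> ^ 3 = (SB3 - SA3) / ?N + Bs / ?N" unfolding mcH' using f4 N0 by (simp add: field_simps)
    have e3: "(1 + 1 / (36 * \<gamma>)) * (Bs / ?N) = Bs / ?N + Bs / ?N / (36 * \<gamma>)" by (simp add: algebra_simps)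
    show ?thesis unfolding e1 e2 e3 using s6 by linarith
  qed
  show ?thesis using H'sp H'sub codim_ok main by blast
qed

end
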